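(* Let $\Gamma=(V,E)$ be a finite simple graph on $V=\{1,\dots,n\}$, let $\omega$ be the clique number of $\Gamma$ (the largest size of a clique in $\Gamma$), and let $\{T_j\}_{j=1}^n$ be a $\Gamma$-family on a Hilbert space $\mathcal{H}$ satisfying the weak Brehmer's condition. Then for each $m\geq1$ and each $h\in\mathcal{H}$, \[\sum_{p\in A_\Gamma^+,\ |p|=m}\|T_p^*h\|^2\leq\binom{\omega+m-1}{m}\|h\|^2.\]
   Context: $A_\Gamma^+=\langle e_1,\dots,e_n : e_ie_j=e_je_i \text{ if } ij\in E\rangle$ is the right-angled Artin monoid; $|p|$ denotes the total number of generators in any expression of $p$ as a product of generators (well-defined), with $|1|=0$. A $\Gamma$-family is a family of contractions $T_1,\dots,T_n$ on $\mathcal{H}$ with $T_iT_j=T_jT_i$ whenever $ij\in E$; it defines a unital representation $p\mapsto T_p$ of $A_\Gamma^+$ with $T_{e_i}=T_i$. For a finite $U\subset A_\Gamma^+$, $\vee U=\infty$ if $\bigcap_{p\in U}pA_\Gamma^+=\emptyset$, otherwise $\vee U$ is the unique $r$ with $\bigcap_{p\in U}pA_\Gamma^+=rA_\Gamma^+$ ($\vee\emptyset=1$); $T_{\vee U}:=0$ if $\vee U=\infty$. For a set $U$ of generators, $\vee U<\infty$ iff the corresponding vertices form a clique, and then $\vee U=\prod_{e_i\in U}e_i$. The complement graph $\Gamma^c$ has vertex set $V$ and edges $\{ij: i\ne j,\ ij\notin E\}$. Weak Brehmer's condition: for each vertex set $V_i$ of a connected component of $\Gamma^c$, with $\Gamma_i=\Gamma|_{V_i}$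 (the induced subgraph), and for each clique $W$ of $\Gamma_i$ (including $W=\emptyset$), setting $N_{\Gamma_i}(W)=\{e_j: j\in V_i,\ jk\in E \text{ for all } k\in W\}$, one has $\sum_{U\subseteq N_{\Gamma_i}(W)}(-1)^{|U|}T_{\vee U}T_{\vee U}^*\geq0$. *)

theory Defs
  imports "HOL-Analysis.Analysis"
begin

text \<open>Elements of the right-angled Artin monoid are represented by words (lists of
  vertices) modulo the congruence generated by swapping adjacent commuting letters.\<close>

definition swap_step :: "(nat \<Rightarrow> nat \<Rightarrow> bool) \<Rightarrow> nat list \<Rightarrow> nat list \<Rightarrow> bool" where
  "swap_step E u v \<longleftrightarrow> (\<exists>xs ys a b. u = xs @ [a, b] @ ys \<and> v = xs @ [b, a] @ ys \<and> E a b)"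

definition trace_eq :: "(nat \<Rightarrow> nat \<Rightarrow> bool) \<Rightarrow> nat list \<Rightarrow> nat list \<Rightarrow> bool" where
  "trace_eq E = (swap_step E)\<^sup>*\<^sup>*"

definition words :: "nat \<Rightarrow> nat list set" where
  "words n = {w. set w \<subseteq> {1..n}}"

definition monoid_elems_len :: "nat \<Rightarrow> (nat \<Rightarrow> nat \<Rightarrow> bool) \<Rightarrow> nat \<Rightarrow> nat list set set" where
  "monoid_elems_len n E m = {w \<in> words n. length w = m} // {(u, v). trace_eq E u v}"

definition T_word :: "(nat \<Rightarrow> 'h \<Rightarrow> 'h) \<Rightarrow> nat list \<Rightarrow> 'h \<Rightarrow> 'h" where
  "T_word T w = foldr (\<lambda>i f. T i \<circ> f) w id"

definition left_div :: "nat \<Rightarrow> (nat \<Rightarrow> nat \<Rightarrow> bool) \<Rightarrow> nat list \<Rightarrow> nat list \<Rightarrow> bool" where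
  "left_div n E p q \<longleftrightarrow> (\<exists>r \<in> words n. trace_eq E (p @ r) q)"

definition is_join :: "nat \<Rightarrow> (nat \<Rightarrow> nat \<Rightarrow> bool) \<Rightarrow> nat list set \<Rightarrow> nat list \<Rightarrow> bool" where
  "is_join n E U r \<longleftrightarrow> r \<in> words n \<and>
     (\<forall>q \<in> words n. (\<forall>p \<in> U. left_div n E p q) \<longleftrightarrow> left_div n E r q)"

text \<open>T_{\<or>U}, which is 0 when \<or>U = \<infinity> (no such r exists).\<close>
definition T_join :: "nat \<Rightarrow> (nat \<Rightarrow> nat \<Rightarrow> bool) \<Rightarrow> (nat \<Rightarrow> 'h \<Rightarrow> 'h::real_vector) \<Rightarrow> nat list set \<Rightarrow> 'h \<Rightarrow> 'h" where
  "T_join n E T U = (if \<exists>r. is_join n E U r then T_word T (SOME r. is_join n E U r) else (\<lambda>_. 0))"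

definition is_clique :: "(nat \<Rightarrow> nat \<Rightarrow> bool) \<Rightarrow> nat set \<Rightarrow> bool" where
  "is_clique E W \<longleftrightarrow> (\<forall>i \<in> W. \<forall>j \<in> W. i \<noteq> j \<longrightarrow> E i j)"

definition clique_number :: "nat \<Rightarrow> (nat \<Rightarrow> nat \<Rightarrow> bool) \<Rightarrow> nat" where
  "clique_number n E = Max {card W | W. W \<subseteq> {1..n} \<and> is_clique E W}"

definition compl_component :: "nat \<Rightarrow> (nat \<Rightarrow> nat \<Rightarrow> bool) \<Rightarrow> nat \<Rightarrow> nat set" where
  "compl_component n E v = {u \<in> {1..n}.
     (\<lambda>i j. i \<in> {1..n} \<and> j \<in> {1..n} \<and> i \<noteq> j \<and> \<not> E i j)\<^sup>*\<^sup>* v u}"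

definition gamma_family :: "nat \<Rightarrow> (nat \<Rightarrow> nat \<Rightarrow> bool) \<Rightarrow> (nat \<Rightarrow> 'h \<Rightarrow> 'h::real_normed_vector) \<Rightarrow> bool" where
  "gamma_family n E T \<longleftrightarrow>
     (\<forall>i \<in> {1..n}. bounded_linear (T i) \<and> (\<forall>x. norm (T i x) \<le> norm x)) \<and>
     (\<forall>i \<in> {1..n}. \<forall>j \<in> {1..n}. E i j \<longrightarrow> T i \<circ> T j = T j \<circ> T i)"

definition weak_brehmer :: "nat \<Rightarrow> (nat \<Rightarrow> nat \<Rightarrow> bool) \<Rightarrow> (nat \<Rightarrow> 'h \<Rightarrow> 'h::real_inner) \<Rightarrow> bool" where
  "weak_brehmer n E T \<longleftrightarrow>
     (\<forall>v \<in> {1..n}. \<forall>W. W \<subseteq> compl_component n E v \<and> is_clique E W \<longrightarrow>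
        (let N = {j \<in> compl_component n E v. \<forall>k \<in> W. E j k} in
         \<forall>h. 0 \<le> (\<Sum>U \<in> Pow N. (-1) ^ card U *\<^sub>R
                    T_join n E T ((\<lambda>i. [i]) ` U) (adjoint (T_join n E T ((\<lambda>i. [i]) ` U)) h)) \<bullet> h))"

end

theory Submission
  imports Defs
begin

lemma parallelo:
  fixes a b :: "'a::real_inner"
  shows "(norm (a + b))\<^sup>2 + (norm (a - b))\<^sup>2 = 2 * (norm a)\<^sup>2 + 2 * (norm b)\<^sup>2"
  by (simp add: power2_norm_eq_inner inner_add inner_diff inner_commute algebra_simps)

lemma proj_exists:
  fixes M :: "'a::{real_inner,complete_space} set"
  assumes cl: "closed M" and sub: "subspace M"
  shows "\<exists>m0\<in>M. \<forall>m\<in>M. norm (x - m0) \<le> norm (x - m)"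
proof -
  define d where "d = Inf ((\<lambda>m. norm (x - m)) ` M)"
  have ne: "(\<lambda>m. norm (x - m)) ` M \<noteq> {}" using sub subspace_0 by blast
  have bdd: "bdd_below ((\<lambda>m. norm (x - m)) ` M)" by (rule bdd_belowI[of _ 0]) auto
  have dle: "d \<le> norm (x - m)" if "m \<in> M" for m
    unfolding d_def using bdd that by (simp add: cInf_lower)
  have d0: "d \<ge> 0" unfolding d_def using ne by (auto intro: cInf_greatest)
  have "\<exists>m\<in>M. norm (x - m) < d + 1 / real (Suc k)" for k
  proof -
    have "Inf ((\<lambda>m. norm (x - m)) ` M) < d + 1 / real (Suc k)" unfolding d_def by simp
    then show ?thesis using cInf_less_iff[OF ne bdd] by auto
  qed
  then obtain s where sM: "\<And>k. s k \<in> M" and sl: "\<And>k. norm (x - s k) < d + 1 / real (Suc k)"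
    by metis
  define c where "c = 2 * d + 1"
  have c0: "c > 0" using d0 by (simp add: c_def)
  have sq: "(norm (x - s k))\<^sup>2 \<le> d\<^sup>2 + c / real (Suc k)" for k
  proof -
    have a: "norm (x - s k) \<le> d + 1 / real (Suc k)" using sl[of k] by simp
    have b: "0 \<le> norm (x - s k)" by simp
    have "(norm (x - s k))\<^sup>2 \<le> (d + 1 / real (Suc k))\<^sup>2" using a b by (simp add: power_mono)
    also have "\<dots> = d\<^sup>2 + 2 * d / real (Suc k) + 1 / (real (Suc k))\<^sup>2"
      by (simp add: power2_sum power_divide)
    also have "\<dots> \<le> d\<^sup>2 + c / real (Suc k)"
    proof -
      have "1 / (real (Suc k))\<^sup>2 \<le> 1 / real (Suc k)"
        by (simp add: power2_eq_square divide_simps)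
      then show ?thesis by (simp add: c_def add_divide_distrib)
    qed
    finally show ?thesis .
  qed
  have dist_sq: "(norm (s i - s j))\<^sup>2 \<le> 2 * c / real (Suc i) + 2 * c / real (Suc j)" for i j
  proof -
    have mid: "(1/2) *\<^sub>R (s i + s j) \<in> M"
      using sM sub by (simp add: subspace_add subspace_scale)
    have "d \<le> norm (x - (1/2) *\<^sub>R (s i + s j))" using dle[OF mid] .
    hence "d\<^sup>2 \<le> (norm (x - (1/2) *\<^sub>R (s i + s j)))\<^sup>2" using d0 by (simp add: power_mono)
    moreover have "x - (1/2) *\<^sub>R (s i + s j) = (1/2) *\<^sub>R ((x - s i) + (x - s j))"
    proof -
      have "x = ((1/2::real) + 1/2) *\<^sub>R x" by simp
      also have "\<dots> = (1/2) *\<^sub>R x + (1/2) *\<^sub>R x" by (rule scaleR_add_left)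
      finally show ?thesis by (simp add: algebra_simps)
    qed
    ultimately have m: "4 * d\<^sup>2 \<le> (norm ((x - s i) + (x - s j)))\<^sup>2"
      by (simp add: power2_eq_square)
    have "s i - s j = (x - s j) - (x - s i)" by simp
    hence "(norm (s i - s j))\<^sup>2 = (norm ((x - s i) - (x - s j)))\<^sup>2"
      by (metis norm_minus_commute)
    also have "\<dots> = 2 * (norm (x - s i))\<^sup>2 + 2 * (norm (x - s j))\<^sup>2 - (norm ((x - s i) + (x - s j)))\<^sup>2"
      using parallelo[of "x - s i" "x - s j"] by linarith
    finally show ?thesis using m sq[of i] sq[of j] by linarith
  qed
  have "Cauchy s"
  proof (rule metric_CauchyI)
    fix e :: real assume e: "e > 0"
    obtain N where N0: "4 * c / e\<^sup>2 < real N"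
      using reals_Archimedean2 by blast
    hence N: "4 * c / e\<^sup>2 < real (Suc N)" by simp
    show "\<exists>M. \<forall>m\<ge>M. \<forall>n\<ge>M. dist (s m) (s n) < e"
    proof (intro exI allI impI)
      fix i j assume i: "i \<ge> N" and j: "j \<ge> N"
      have "c / real (Suc i) \<le> c / real (Suc N)" using i c0 by (simp add: frac_le)
      moreover have "c / real (Suc j) \<le> c / real (Suc N)" using j c0 by (simp add: frac_le)
      moreover have "4 * c / real (Suc N) < e\<^sup>2"
        using N e by (simp add: field_simps)
      ultimately have "(norm (s i - s j))\<^sup>2 < e\<^sup>2" using dist_sq[of i j] by simp
      hence "norm (s i - s j) < e" using e by (simp add: power_less_imp_less_base)
      then show "dist (s i) (s j) < e" by (simp add: dist_norm)
    qed
  qed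
  then obtain m0 where lim: "s \<longlonglongrightarrow> m0" using Cauchy_convergent_iff convergent_def by blast
  have m0M: "m0 \<in> M" using cl sM lim closed_sequentially by blast
  have "(\<lambda>k. norm (x - s k)) \<longlonglongrightarrow> norm (x - m0)"
    by (intro tendsto_intros lim)
  moreover have "(\<lambda>k. d + 1 / real (Suc k)) \<longlonglongrightarrow> d + 0"
    by (intro tendsto_intros LIMSEQ_inverse_real_of_nat[unfolded inverse_eq_divide])
  ultimately have "norm (x - m0) \<le> d"
    using sl by (intro LIMSEQ_le[of _ _ "\<lambda>k. d + 1 / real (Suc k)"]) (auto intro: less_imp_le)
  then show ?thesis using m0M dle by (metis order_trans)
qed

lemma proj_orth:
  fixes M :: "'a::real_inner set"
  assumes sub: "subspace M" and m0M: "m0 \<in> M" and min: "\<forall>m\<in>M. norm (x - m0) \<le> norm (x - m)"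
    and mM: "m \<in> M"
  shows "(x - m0) \<bullet> m = 0"
proof (rule ccontr)
  assume ne: "(x - m0) \<bullet> m \<noteq> 0"
  hence m0': "m \<noteq> 0" by auto
  define t where "t = ((x - m0) \<bullet> m) / (m \<bullet> m)"
  have mm: "m \<bullet> m > 0" using m0' by simp
  have "m0 + t *\<^sub>R m \<in> M" using sub m0M mM by (simp add: subspace_add subspace_scale)
  hence "norm (x - m0) \<le> norm (x - (m0 + t *\<^sub>R m))" using min by blast
  hence "(norm (x - m0))\<^sup>2 \<le> (norm ((x - m0) - t *\<^sub>R m))\<^sup>2"
    by (simp add: power_mono algebra_simps)
  hence "(x - m0) \<bullet> (x - m0) \<le> (x - m0) \<bullet> (x - m0) - 2 * t * ((x - m0) \<bullet> m) + t * t * (m \<bullet> m)"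
    by (simp add: power2_norm_eq_inner inner_diff inner_commute algebra_simps)
  hence "0 \<le> - 2 * t * ((x - m0) \<bullet> m) + t * t * (m \<bullet> m)" by linarith
  also have "- 2 * t * ((x - m0) \<bullet> m) + t * t * (m \<bullet> m) = - (((x - m0) \<bullet> m))\<^sup>2 / (m \<bullet> m)"
    using mm by (simp add: t_def field_simps power2_eq_square)
  finally have "((x - m0) \<bullet> m)\<^sup>2 / (m \<bullet> m) \<le> 0" by linarith
  moreover have "((x - m0) \<bullet> m)\<^sup>2 / (m \<bullet> m) > 0" using ne mm by simp
  ultimately show False by linarith
qed

lemma riesz:
  fixes \<phi> :: "'a::{real_inner,complete_space} \<Rightarrow> real"
  assumes bl: "bounded_linear \<phi>"
  shows "\<exists>y. \<forall>x. \<phi> x = x \<bullet> y"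
proof (cases "\<forall>x. \<phi> x = 0")
  case True then show ?thesis by (intro exI[of _ 0]) simp
next
  case False
  then obtain x0 where x0: "\<phi> x0 \<noteq> 0" by blast
  interpret bounded_linear \<phi> by fact
  define M where "M = {x. \<phi> x = 0}"
  have sub: "subspace M" unfolding M_def subspace_def by (simp add: add scale)
  have cl: "closed M" unfolding M_def
    by (rule closed_Collect_eq[OF linear_continuous_on[OF bl] continuous_on_const])
  obtain m0 where m0M: "m0 \<in> M" and min: "\<forall>m\<in>M. norm (x0 - m0) \<le> norm (x0 - m)"
    using proj_exists[OF cl sub] by blast
  define w where "w = x0 - m0"
  have orth: "w \<bullet> m = 0" if "m \<in> M" for m using proj_orth[OF sub m0M min that] by (simp add: w_def)
  have pw: "\<phi> w = \<phi> x0" using m0M by (simp add: w_def M_def diff)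
  hence wne: "w \<noteq> 0" using x0 zero by auto
  have ww: "w \<bullet> w > 0" using wne by simp
  show ?thesis
  proof (intro exI allI)
    fix x
    have "x - (\<phi> x / \<phi> w) *\<^sub>R w \<in> M" using pw x0 by (simp add: M_def diff scale)
    hence "w \<bullet> (x - (\<phi> x / \<phi> w) *\<^sub>R w) = 0" by (rule orth)
    hence "w \<bullet> x = (\<phi> x / \<phi> w) * (w \<bullet> w)" by (simp add: inner_diff)
    then show "\<phi> x = x \<bullet> ((\<phi> w / (w \<bullet> w)) *\<^sub>R w)"
      using pw x0 ww by (simp add: inner_commute field_simps)
  qed
qed

lemma adjoint_works_H:
  fixes f :: "'a::{real_inner,complete_space} \<Rightarrow> 'a"
  assumes bl: "bounded_linear f"
  shows "f x \<bullet> y = x \<bullet> adjoint f y"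
proof -
  have "\<forall>y. \<exists>y'. \<forall>x. f x \<bullet> y = x \<bullet> y'"
  proof
    fix y
    have "bounded_linear (\<lambda>x. f x \<bullet> y)"
      using bounded_linear_compose[OF bounded_linear_inner_left bl] .
    then show "\<exists>y'. \<forall>x. f x \<bullet> y = x \<bullet> y'" using riesz by blast
  qed
  then obtain g where g: "\<forall>y x. f x \<bullet> y = x \<bullet> g y" by metis
  hence "\<exists>f'. \<forall>x y. f x \<bullet> y = x \<bullet> f' y" by blast
  then show ?thesis unfolding adjoint_def by (rule someI_ex[where P="\<lambda>f'. \<forall>x y. f x \<bullet> y = x \<bullet> f' y", THEN spec, THEN spec])
qed


definition first_ok :: "(nat \<Rightarrow> nat \<Rightarrow> bool) \<Rightarrow> nat list \<Rightarrow> nat \<Rightarrow> bool" where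
  "first_ok E w a \<longleftrightarrow> a \<in> set w \<and> (\<forall>c \<in> set (takeWhile (\<lambda>x. x \<noteq> a) w). E c a)"

lemma first_ok_Cons:
  "first_ok E (c # w) a \<longleftrightarrow> c = a \<or> (E c a \<and> first_ok E w a)"
  by (auto simp: first_ok_def)

lemma first_ok_Nil[simp]: "\<not> first_ok E [] a"
  by (simp add: first_ok_def)

lemma first_ok_append:
  "first_ok E (xs @ ys) a \<longleftrightarrow> first_ok E xs a \<or> (a \<notin> set xs \<and> (\<forall>c\<in>set xs. E c a) \<and> first_ok E ys a)"
  by (induction xs) (auto simp: first_ok_Cons)

lemma swap_step_first_ok:
  assumes sym: "\<And>i j. E i j \<Longrightarrow> E j i" and irrefl: "\<And>i. \<not> E i i"
    and st: "swap_step E u v"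
  shows "first_ok E u a = first_ok E v a"
proof -
  obtain xs ys x y where u: "u = xs @ [x, y] @ ys" and v: "v = xs @ [y, x] @ ys" and e: "E x y"
    using st unfolding swap_step_def by blast
  have xy: "x \<noteq> y" using e irrefl by auto
  have "first_ok E (x # y # ys) a = first_ok E (y # x # ys) a"
    unfolding first_ok_Cons using e sym[of x y] xy by blast
  then show ?thesis unfolding u v by (simp only: append_Cons append_Nil first_ok_append)
qed

lemma swap_step_sym:
  assumes sym: "\<And>i j. E i j \<Longrightarrow> E j i"
  shows "swap_step E u v \<Longrightarrow> swap_step E v u"
  unfolding swap_step_def using sym by blast

lemma trace_eq_refl[simp]: "trace_eq E u u"
  by (simp add: trace_eq_def)

lemma trace_eq_trans: "trace_eq E u v \<Longrightarrow> trace_eq E v w \<Longrightarrow> trace_eq E u w"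
  unfolding trace_eq_def by simp

lemma trace_eq_sym:
  assumes sym: "\<And>i j. E i j \<Longrightarrow> E j i"
  shows "trace_eq E u v \<Longrightarrow> trace_eq E v u"
  unfolding trace_eq_def
proof (induction rule: rtranclp_induct)
  case base then show ?case by simp
next
  case (step y z)
  then show ?case using swap_step_sym[of E, OF sym, of y z]
    by (meson converse_rtranclp_into_rtranclp)
qed

lemma trace_eq_first_ok:
  assumes sym: "\<And>i j. E i j \<Longrightarrow> E j i" and irrefl: "\<And>i. \<not> E i i"
  shows "trace_eq E u v \<Longrightarrow> first_ok E u a = first_ok E v a"
  unfolding trace_eq_def
  by (induction rule: rtranclp_induct) (use swap_step_first_ok[of E, OF sym irrefl] in auto)

lemma swap_step_ctx: "swap_step E u v \<Longrightarrow> swap_step E (p @ u @ q) (p @ v @ q)"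
  unfolding swap_step_def by (metis append.assoc)

lemma trace_eq_ctx: "trace_eq E u v \<Longrightarrow> trace_eq E (p @ u @ q) (p @ v @ q)"
  unfolding trace_eq_def
  by (induction rule: rtranclp_induct) (auto intro: rtranclp.rtrancl_into_rtrancl swap_step_ctx)

lemma trace_eq_Cons: "trace_eq E u v \<Longrightarrow> trace_eq E (c # u) (c # v)"
  using trace_eq_ctx[of E u v "[c]" "[]"] by simp

lemma trace_eq_app: "trace_eq E u v \<Longrightarrow> trace_eq E u' v' \<Longrightarrow> trace_eq E (u @ u') (v @ v')"
  using trace_eq_ctx[of E u v "[]" u'] trace_eq_ctx[of E u' v' v "[]"]
  by (auto intro: trace_eq_trans)

lemma swap_step_mset: "swap_step E u v \<Longrightarrow> mset u = mset v"
  unfolding swap_step_def by auto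

lemma trace_eq_mset: "trace_eq E u v \<Longrightarrow> mset u = mset v"
  unfolding trace_eq_def
  by (induction rule: rtranclp_induct) (auto dest: swap_step_mset)

lemma trace_eq_set: "trace_eq E u v \<Longrightarrow> set u = set v"
  using trace_eq_mset[of E u v] by (metis set_mset_mset)

lemma trace_eq_length: "trace_eq E u v \<Longrightarrow> length u = length v"
  using trace_eq_mset[of E u v] by (metis size_mset)

lemma first_ok_move:
  assumes "first_ok E w a"
  shows "trace_eq E w (a # remove1 a w)"
  using assms
proof (induction w)
  case Nil then show ?case by simp
next
  case (Cons c w)
  show ?case
  proof (cases "c = a")
    case True then show ?thesis by simp
  next
    case False
    then have e: "E c a" and f: "first_ok E w a" using Cons.prems by (auto simp: first_ok_Cons)
    have "trace_eq E (c # w) (c # a # remove1 a w)" using Cons.IH[OF f] by (rule trace_eq_Cons)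
    moreover have "swap_step E (c # a # remove1 a w) (a # c # remove1 a w)"
      unfolding swap_step_def
      by (rule exI[of _ "[]"], rule exI[of _ "remove1 a w"], rule exI[of _ c], rule exI[of _ a]) (simp add: e)
    hence "trace_eq E (c # a # remove1 a w) (a # c # remove1 a w)"
      unfolding trace_eq_def by (rule r_into_rtranclp)
    ultimately show ?thesis using False
      by (auto intro: trace_eq_trans)
  qed
qed

lemma swap_step_remove1:
  assumes irrefl: "\<And>i. \<not> E i i" and st: "swap_step E u v"
  shows "trace_eq E (remove1 a u) (remove1 a v)"
proof -
  obtain xs ys x y where u: "u = xs @ [x, y] @ ys" and v: "v = xs @ [y, x] @ ys" and e: "E x y"
    using st unfolding swap_step_def by blast
  have xy: "x \<noteq> y" using e irrefl by auto
  show ?thesis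
  proof (cases "a \<in> set xs")
    case True
    then have "remove1 a u = remove1 a xs @ [x, y] @ ys" "remove1 a v = remove1 a xs @ [y, x] @ ys"
      by (simp_all add: u v remove1_append)
    moreover have "swap_step E (remove1 a xs @ [x, y] @ ys) (remove1 a xs @ [y, x] @ ys)"
      unfolding swap_step_def using e by blast
    ultimately show ?thesis unfolding trace_eq_def by (metis r_into_rtranclp)
  next
    case False
    show ?thesis
    proof (cases "a = x \<or> a = y")
      case True
      then have "remove1 a u = remove1 a v" using False xy by (auto simp: u v remove1_append)
      then show ?thesis by simp
    next
      case F2: False
      then have "remove1 a u = xs @ [x, y] @ remove1 a ys" "remove1 a v = xs @ [y, x] @ remove1 a ys"
        using False by (auto simp: u v remove1_append)
      moreover have "swap_step E (xs @ [x, y] @ remove1 a ys) (xs @ [y, x] @ remove1 a ys)"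
        unfolding swap_step_def using e by blast
      ultimately show ?thesis unfolding trace_eq_def by (metis r_into_rtranclp)
    qed
  qed
qed

lemma trace_eq_remove1:
  assumes irrefl: "\<And>i. \<not> E i i"
  shows "trace_eq E u v \<Longrightarrow> trace_eq E (remove1 a u) (remove1 a v)"
  unfolding trace_eq_def
proof (induction rule: rtranclp_induct)
  case base then show ?case by simp
next
  case (step y z)
  then show ?case using swap_step_remove1[of E, OF irrefl, of y z a] unfolding trace_eq_def by simp
qed

lemma trace_eq_cancel:
  assumes irrefl: "\<And>i. \<not> E i i"
  shows "trace_eq E (a # u) (a # v) \<Longrightarrow> trace_eq E u v"
  using trace_eq_remove1[of E, OF irrefl, of "a # u" "a # v" a] by simp

lemma first_ok_both:
  assumes sym: "\<And>i j. E i j \<Longrightarrow> E j i"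
  shows "first_ok E w u \<Longrightarrow> first_ok E w v \<Longrightarrow> u \<noteq> v \<Longrightarrow> E u v"
proof (induction w)
  case Nil then show ?case by simp
next
  case (Cons c w)
  have u: "c = u \<or> (E c u \<and> first_ok E w u)" and v: "c = v \<or> (E c v \<and> first_ok E w v)"
    using Cons.prems by (simp_all add: first_ok_Cons)
  show ?case
  proof (cases "c = u")
    case True then show ?thesis using v Cons.prems(3) by auto
  next
    case F: False
    show ?thesis
    proof (cases "c = v")
      case True then show ?thesis using u F sym[of v u] by auto
    next
      case False then show ?thesis using u v F Cons.IH Cons.prems(3) by auto
    qed
  qed
qed

lemma first_ok_hd: "first_ok E (a # w) a"
  by (simp add: first_ok_Cons)

lemma first_ok_set: "first_ok E w a \<Longrightarrow> a \<in> set w"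
  by (simp add: first_ok_def)


lemma T_word_Nil[simp]: "T_word T [] = id" by (simp add: T_word_def)
lemma T_word_Cons[simp]: "T_word T (a # w) = T a \<circ> T_word T w" by (simp add: T_word_def)
lemma T_word_append: "T_word T (u @ v) = T_word T u \<circ> T_word T v"
  by (induction u) auto

lemma adjoint_unique:
  fixes f :: "'a::{real_inner,complete_space} \<Rightarrow> 'a"
  assumes bl: "bounded_linear f" and g: "\<And>x y. f x \<bullet> y = x \<bullet> g y"
  shows "adjoint f = g"
proof
  fix y
  have "x \<bullet> (adjoint f y - g y) = 0" for x
    using adjoint_works_H[OF bl, of x y] g[of x y] by (simp add: inner_diff_right)
  from this[of "adjoint f y - g y"] show "adjoint f y = g y" by simp
qed

lemma adjoint_comp:
  fixes f g :: "'a::{real_inner,complete_space} \<Rightarrow> 'a"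
  assumes f: "bounded_linear f" and g: "bounded_linear g"
  shows "adjoint (f \<circ> g) = adjoint g \<circ> adjoint f"
proof (rule adjoint_unique)
  show "bounded_linear (f \<circ> g)" using bounded_linear_compose[OF f g] by (simp add: o_def)
  fix x y
  show "(f \<circ> g) x \<bullet> y = x \<bullet> (adjoint g \<circ> adjoint f) y"
    using adjoint_works_H[OF f, of "g x" y] adjoint_works_H[OF g, of x "adjoint f y"] by simp
qed

lemma adjoint_id_H: "adjoint (id :: 'a::{real_inner,complete_space} \<Rightarrow> 'a) = id"
  by (rule adjoint_unique) (auto intro: bounded_linear_ident simp: id_def)

lemma adjoint_sq:
  fixes f :: "'a::{real_inner,complete_space} \<Rightarrow> 'a"
  assumes bl: "bounded_linear f"
  shows "f (adjoint f y) \<bullet> y = (norm (adjoint f y))\<^sup>2"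
  using adjoint_works_H[OF bl, of "adjoint f y" y] by (simp add: power2_norm_eq_inner)

lemma first_ok_clique_list:
  assumes "distinct l" "is_clique E (set l)" "u \<in> set l"
  shows "first_ok E l u"
proof -
  have "\<forall>c\<in>set (takeWhile (\<lambda>x. x \<noteq> u) l). E c u"
  proof
    fix c assume c: "c \<in> set (takeWhile (\<lambda>x. x \<noteq> u) l)"
    then have "c \<in> set l" "c \<noteq> u" by (auto dest: set_takeWhileD)
    then show "E c u" using assms(2,3) unfolding is_clique_def by blast
  qed
  then show ?thesis using assms(3) by (simp add: first_ok_def)
qed

locale ctx =
  fixes n :: nat and E :: "nat \<Rightarrow> nat \<Rightarrow> bool"
    and T :: "nat \<Rightarrow> 'h::{real_inner, complete_space} \<Rightarrow> 'h"
  assumes sym: "\<And>i j. E i j \<Longrightarrow> E j i"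
    and irrefl: "\<And>i. \<not> E i i"
    and onV: "\<And>i j. E i j \<Longrightarrow> i \<in> {1..n} \<and> j \<in> {1..n}"
    and fam: "gamma_family n E T"
begin

abbreviation "V \<equiv> {1..n}"

lemma tsym: "trace_eq E u v \<Longrightarrow> trace_eq E v u"
  using trace_eq_sym[of E, OF sym] .

lemma tfirst: "trace_eq E u v \<Longrightarrow> first_ok E u a = first_ok E v a"
  using trace_eq_first_ok[of E, OF sym irrefl] .

lemma tcancel: "trace_eq E (a # u) (a # v) \<Longrightarrow> trace_eq E u v"
  using trace_eq_cancel[of E, OF irrefl] .

lemma bl_T: "i \<in> V \<Longrightarrow> bounded_linear (T i)"
  using fam by (simp add: gamma_family_def)

lemma bl_word: "set w \<subseteq> V \<Longrightarrow> bounded_linear (T_word T w)"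
proof (induction w)
  case Nil then show ?case by (simp add: id_def bounded_linear_ident)
next
  case (Cons a w)
  then have "bounded_linear (\<lambda>x. T a (T_word T w x))"
    using bounded_linear_compose[OF bl_T[of a] Cons.IH] by simp
  then show ?case by (simp add: o_def)
qed

lemma comm: "E i j \<Longrightarrow> T i \<circ> T j = T j \<circ> T i"
proof -
  assume e: "E i j"
  have "i \<in> V" "j \<in> V" using onV[OF e] by auto
  then show ?thesis using fam e unfolding gamma_family_def by blast
qed

lemma T_word_swap: "swap_step E u v \<Longrightarrow> T_word T u = T_word T v"
proof -
  assume "swap_step E u v"
  then obtain xs ys a b where u: "u = xs @ [a, b] @ ys" and v: "v = xs @ [b, a] @ ys" and e: "E a b"
    unfolding swap_step_def by blast
  have "T_word T u = T_word T xs \<circ> (T a \<circ> T b) \<circ> T_word T ys"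
    by (simp add: u T_word_append o_assoc)
  also have "\<dots> = T_word T xs \<circ> (T b \<circ> T a) \<circ> T_word T ys" using comm[OF e] by simp
  also have "\<dots> = T_word T v" by (simp add: v T_word_append o_assoc)
  finally show ?thesis .
qed

lemma T_word_trace: "trace_eq E u v \<Longrightarrow> T_word T u = T_word T v"
  unfolding trace_eq_def
  by (induction rule: rtranclp_induct) (auto dest: T_word_swap)

lemma clique_perm:
  "distinct l1 \<Longrightarrow> distinct l2 \<Longrightarrow> set l1 = set l2 \<Longrightarrow> is_clique E (set l1) \<Longrightarrow> trace_eq E l1 l2"
proof (induction l1 arbitrary: l2)
  case Nil then show ?case by simp
next
  case (Cons a r)
  have a2: "a \<in> set l2" using Cons.prems by auto
  have "first_ok E l2 a"
    using first_ok_clique_list[of l2 E a] Cons.prems a2 by simp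
  then have t1: "trace_eq E l2 (a # remove1 a l2)" by (rule first_ok_move)
  have "trace_eq E r (remove1 a l2)"
  proof (rule Cons.IH)
    show "distinct r" using Cons.prems by simp
    show "distinct (remove1 a l2)" using Cons.prems by simp
    have "set r = set l2 - {a}" using Cons.prems(1,3) by auto
    then show "set r = set (remove1 a l2)" using Cons.prems(2) by (simp add: set_remove1_eq)
    show "is_clique E (set r)" using Cons.prems(4) by (simp add: is_clique_def)
  qed
  then have "trace_eq E (a # r) (a # remove1 a l2)" by (rule trace_eq_Cons)
  then show ?case using tsym[OF t1] by (rule trace_eq_trans)
qed

lemma left_div_single:
  assumes q: "q \<in> words n" and u: "u \<in> V"
  shows "left_div n E [u] q \<longleftrightarrow> first_ok E q u"
proof
  assume "left_div n E [u] q"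
  then obtain r where "trace_eq E ([u] @ r) q" unfolding left_div_def by blast
  then show "first_ok E q u" using tfirst first_ok_hd by fastforce
next
  assume f: "first_ok E q u"
  have "remove1 u q \<in> words n" using q by (auto simp: words_def dest: in_set_remove1[THEN iffD1, rotated] notin_set_remove1)
  moreover have "trace_eq E ([u] @ remove1 u q) q" using tsym[OF first_ok_move[OF f]] by simp
  ultimately show "left_div n E [u] q" unfolding left_div_def by blast
qed

lemma left_div_clique:
  assumes "distinct l" "is_clique E (set l)" "q \<in> words n"
  shows "left_div n E l q \<longleftrightarrow> (\<forall>u\<in>set l. first_ok E q u)"
  using assms
proof (induction l arbitrary: q)
  case Nil
  have "left_div n E [] q" using Nil unfolding left_div_def by (intro bexI[of _ q]) auto
  then show ?case by simp
next
  case (Cons a l)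
  show ?case
  proof
    assume "left_div n E (a # l) q"
    then obtain r where tr: "trace_eq E ((a # l) @ r) q" unfolding left_div_def by blast
    show "\<forall>u\<in>set (a # l). first_ok E q u"
    proof
      fix u assume u: "u \<in> set (a # l)"
      have "first_ok E (a # l) u" using first_ok_clique_list[OF Cons.prems(1,2) u] .
      then have "first_ok E ((a # l) @ r) u" unfolding first_ok_append[of E "a # l" r u] by simp
      then show "first_ok E q u" using tfirst[OF tr] by simp
    qed
  next
    assume all: "\<forall>u\<in>set (a # l). first_ok E q u"
    then have fa: "first_ok E q a" by simp
    define q' where "q' = remove1 a q"
    have tq: "trace_eq E q (a # q')" unfolding q'_def by (rule first_ok_move[OF fa])
    have q'w: "q' \<in> words n" using Cons.prems(3) unfolding q'_def words_def
      by (auto dest: notin_set_remove1)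
    have "\<forall>u\<in>set l. first_ok E q' u"
    proof
      fix u assume u: "u \<in> set l"
      have "first_ok E (a # q') u" using all u tfirst[OF tq] by simp
      moreover have "u \<noteq> a" using Cons.prems(1) u by auto
      ultimately show "first_ok E q' u" by (simp add: first_ok_Cons)
    qed
    moreover have "distinct l" "is_clique E (set l)" using Cons.prems(1,2) by (auto simp: is_clique_def)
    ultimately have "left_div n E l q'" using Cons.IH q'w by blast
    then obtain r where r: "r \<in> words n" "trace_eq E (l @ r) q'" unfolding left_div_def by blast
    have "trace_eq E ((a # l) @ r) (a # q')" using trace_eq_Cons[OF r(2)] by simp
    then have "trace_eq E ((a # l) @ r) q" using tsym[OF tq] by (rule trace_eq_trans)
    then show "left_div n E (a # l) q" using r(1) unfolding left_div_def by blast
  qed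
qed

definition TS :: "nat set \<Rightarrow> 'h \<Rightarrow> 'h" where
  "TS K = T_word T (sorted_list_of_set K)"

lemma T_join_clique:
  assumes U: "U \<subseteq> V" and cl: "is_clique E U"
  shows "T_join n E T ((\<lambda>i. [i]) ` U) = TS U"
proof -
  have fin: "finite U" using U finite_subset by blast
  define S where "S = (\<lambda>i. [i]) ` U"
  define r0 where "r0 = sorted_list_of_set U"
  have r0: "distinct r0" "set r0 = U" using fin by (simp_all add: r0_def)
  have r0w: "r0 \<in> words n" using r0 U by (simp add: words_def)
  have S_iff: "(\<forall>p\<in>S. left_div n E p q) \<longleftrightarrow> (\<forall>u\<in>U. first_ok E q u)" if "q \<in> words n" for q
  proof -
    have "(\<forall>p\<in>S. left_div n E p q) \<longleftrightarrow> (\<forall>u\<in>U. left_div n E [u] q)" unfolding S_def by simp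
    also have "\<dots> \<longleftrightarrow> (\<forall>u\<in>U. first_ok E q u)" using left_div_single[OF that] U by blast
    finally show ?thesis .
  qed
  have j0: "is_join n E S r0"
    unfolding is_join_def using r0w S_iff left_div_clique[OF r0(1)] r0 cl by auto
  then have ex: "\<exists>r. is_join n E S r" by blast
  define r1 where "r1 = (SOME r. is_join n E S r)"
  have j1: "is_join n E S r1" unfolding r1_def using someI_ex[OF ex] .
  have r1w: "r1 \<in> words n" using j1 by (simp add: is_join_def)
  have ldself: "left_div n E r1 r1" unfolding left_div_def using r1w
    by (intro bexI[of _ "[]"]) (auto simp: words_def)
  have "\<forall>p\<in>S. left_div n E p r1" using j1 r1w ldself unfolding is_join_def by blast
  then have "\<forall>u\<in>U. first_ok E r1 u" using S_iff[OF r1w] by blast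
  then have sub1: "U \<subseteq> set r1" by (auto dest: first_ok_set)
  have ld0: "left_div n E r0 r0" unfolding left_div_def using r0w
    by (intro bexI[of _ "[]"]) (auto simp: words_def)
  have "\<forall>p\<in>S. left_div n E p r0" using j0 r0w ld0 unfolding is_join_def by blast
  then have "left_div n E r1 r0" using j1 r0w unfolding is_join_def by blast
  then obtain r' where "trace_eq E (r1 @ r') r0" unfolding left_div_def by blast
  then have ms: "mset (r1 @ r') = mset r0" by (rule trace_eq_mset)
  have sub2: "set r1 \<subseteq> U"
    using ms r0(2) by (metis Un_iff set_append set_mset_mset subsetI)
  have seq: "set r1 = U" using sub1 sub2 by blast
  have "length r1 \<le> length r0" using ms by (metis le_add1 length_append size_mset)
  also have "length r0 = card U" using r0 by (metis distinct_card)
  finally have "length r1 \<le> card (set r1)" using seq by simp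
  then have dr1: "distinct r1" using card_length[of r1] card_distinct[of r1] by linarith
  have "trace_eq E r1 r0" using clique_perm[OF dr1 r0(1)] seq r0(2) cl by simp
  then have "T_word T r1 = T_word T r0" by (rule T_word_trace)
  then show ?thesis unfolding T_join_def S_def[symmetric] TS_def r0_def[symmetric] r1_def[symmetric]
    using ex by simp
qed

lemma T_join_nonclique:
  assumes U: "U \<subseteq> V" and ncl: "\<not> is_clique E U"
  shows "T_join n E T ((\<lambda>i. [i]) ` U) = (\<lambda>_. 0)"
proof -
  define S where "S = (\<lambda>i. [i]) ` U"
  have S_iff: "(\<forall>p\<in>S. left_div n E p q) \<longleftrightarrow> (\<forall>u\<in>U. first_ok E q u)" if "q \<in> words n" for q
  proof -
    have "(\<forall>p\<in>S. left_div n E p q) \<longleftrightarrow> (\<forall>u\<in>U. left_div n E [u] q)" unfolding S_def by simp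
    also have "\<dots> \<longleftrightarrow> (\<forall>u\<in>U. first_ok E q u)" using left_div_single[OF that] U by blast
    finally show ?thesis .
  qed
  have "\<not> is_join n E S r" for r
  proof
    assume j: "is_join n E S r"
    have rw: "r \<in> words n" using j by (simp add: is_join_def)
    have "left_div n E r r" unfolding left_div_def using rw
      by (intro bexI[of _ "[]"]) (auto simp: words_def)
    then have "\<forall>u\<in>U. first_ok E r u" using j rw S_iff[OF rw] unfolding is_join_def by blast
    then have "is_clique E U" unfolding is_clique_def using first_ok_both[of E, OF sym] by blast
    then show False using ncl by simp
  qed
  then show ?thesis unfolding T_join_def S_def by auto
qed

lemma TS_union:
  assumes "K \<union> U \<subseteq> V" "is_clique E (K \<union> U)" "K \<inter> U = {}"
  shows "TS K \<circ> TS U = TS (K \<union> U)"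
proof -
  have fin: "finite K" "finite U" using assms(1) by (auto intro: finite_subset)
  have "TS K \<circ> TS U = T_word T (sorted_list_of_set K @ sorted_list_of_set U)"
    by (simp add: TS_def T_word_append)
  also have "\<dots> = TS (K \<union> U)" unfolding TS_def
    by (rule T_word_trace, rule clique_perm) (use fin assms in auto)
  finally show ?thesis .
qed

lemma TS_bl: "K \<subseteq> V \<Longrightarrow> bounded_linear (TS K)"
proof -
  assume K: "K \<subseteq> V"
  then have "finite K" using finite_subset by blast
  then show ?thesis unfolding TS_def using K by (intro bl_word) simp
qed

lemma TS_empty[simp]: "TS {} = id" by (simp add: TS_def)

lemma TS_insert:
  assumes "insert a K \<subseteq> V" "is_clique E (insert a K)" "a \<notin> K"
  shows "T a \<circ> TS K = TS (insert a K)"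
proof -
  have "TS {a} = T a" by (simp add: TS_def)
  then show ?thesis using TS_union[of "{a}" K] assms by auto
qed

end

context ctx begin

definition cls :: "nat list \<Rightarrow> nat list set" where "cls w = {v. trace_eq E w v}"
definition rep :: "nat list set \<Rightarrow> nat list" where "rep X = (SOME w. w \<in> X)"
definition xg :: "'h \<Rightarrow> nat list \<Rightarrow> real" where "xg g w = (norm (adjoint (T_word T w) g))\<^sup>2"
definition R :: "nat \<Rightarrow> 'h \<Rightarrow> nat set \<Rightarrow> real" where
  "R m g B = (\<Sum>X \<in> {X \<in> monoid_elems_len n E m. \<forall>b\<in>B. \<not> first_ok E (rep X) b}. xg g (rep X))"

lemma Cls_eq: "monoid_elems_len n E m = cls ` {w \<in> words n. length w = m}"
  unfolding monoid_elems_len_def quotient_def cls_def by auto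

lemma cls_mem: "w \<in> cls w" by (simp add: cls_def)

lemma rep_cls: "trace_eq E w (rep (cls w))"
proof -
  have "rep (cls w) \<in> cls w" unfolding rep_def using cls_mem by (rule someI)
  then show ?thesis by (simp add: cls_def)
qed

lemma cls_eqI: "trace_eq E w v \<Longrightarrow> cls w = cls v"
  unfolding cls_def using tsym trace_eq_trans by blast

lemma words_trace: "w \<in> words n \<Longrightarrow> trace_eq E w v \<Longrightarrow> v \<in> words n"
  using trace_eq_set by (force simp: words_def)

lemma Cls_rep:
  assumes "X \<in> monoid_elems_len n E m"
  shows "rep X \<in> words n" "length (rep X) = m" "cls (rep X) = X"
proof -
  obtain w where w: "w \<in> words n" "length w = m" "X = cls w" using assms Cls_eq by auto
  have t: "trace_eq E w (rep X)" using rep_cls w(3) by simp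
  show "rep X \<in> words n" using words_trace[OF w(1) t] .
  show "length (rep X) = m" using trace_eq_length[OF t] w(2) by simp
  show "cls (rep X) = X" using cls_eqI[OF t] w(3) by simp
qed

lemma Cls_finite: "finite (monoid_elems_len n E m)"
proof -
  have "{w \<in> words n. length w = m} \<subseteq> {w. set w \<subseteq> V \<and> length w = m}" by (auto simp: words_def)
  then have "finite {w \<in> words n. length w = m}"
    using finite_lists_length_eq[of V m] by (auto intro: finite_subset)
  then show ?thesis using Cls_eq by simp
qed

lemma xg_trace: "trace_eq E u v \<Longrightarrow> xg g u = xg g v"
  unfolding xg_def using T_word_trace by simp

lemma xg_Cons:
  assumes "a \<in> V" "set w \<subseteq> V"
  shows "xg g (a # w) = xg (adjoint (T a) g) w"
proof -
  have "adjoint (T_word T (a # w)) = adjoint (T_word T w) \<circ> adjoint (T a)"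
    using adjoint_comp[OF bl_T[OF assms(1)] bl_word[OF assms(2)]] by simp
  then show ?thesis unfolding xg_def by simp
qed

lemma xg_Nil: "xg g [] = (norm g)\<^sup>2"
  unfolding xg_def by (simp add: adjoint_id_H)

lemma R_0: "R 0 g B = (norm g)\<^sup>2"
proof -
  have c: "monoid_elems_len n E 0 = {cls []}" using Cls_eq by (auto simp: words_def)
  have r: "rep (cls []) = []" using rep_cls[of "[]"] trace_eq_length by fastforce
  have "{X \<in> {cls []}. \<forall>b\<in>B. \<not> first_ok E (rep X) b} = {cls []}" using r by auto
  then show ?thesis unfolding R_def c using r by (simp add: xg_Nil)
qed

definition Ba :: "(nat \<Rightarrow> nat) \<Rightarrow> nat set \<Rightarrow> nat \<Rightarrow> nat set" where
  "Ba rk B a = {b. E a b} \<inter> (B \<union> {b. rk b < rk a})"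

lemma R_Suc:
  assumes inj: "inj_on rk V"
  shows "R (Suc k) g B = (\<Sum>a \<in> V - B. R k (adjoint (T a) g) (Ba rk B a))"
proof -
  define S where "S = {X \<in> monoid_elems_len n E (Suc k). \<forall>b\<in>B. \<not> first_ok E (rep X) b}"
  define Q where "Q = (\<lambda>a. {Y \<in> monoid_elems_len n E k. \<forall>b\<in>Ba rk B a. \<not> first_ok E (rep Y) b})"
  define P where "P = Sigma (V - B) Q"
  define h where "h = (\<lambda>(a, Y). cls (a # rep Y))"
  have QC: "Y \<in> monoid_elems_len n E k" if "Y \<in> Q a" for a Y using that by (simp add: Q_def)
  have bij: "bij_betw h P S"
  proof (rule bij_betw_imageI)
    show "inj_on h P"
    proof (rule inj_onI)
      fix p p' assume p: "p \<in> P" and p': "p' \<in> P" and eq: "h p = h p'"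
      obtain a Y where pa: "p = (a, Y)" by fastforce
      obtain a' Y' where pa': "p' = (a', Y')" by fastforce
      have a: "a \<in> V - B" "Y \<in> Q a" using p pa by (auto simp: P_def)
      have a': "a' \<in> V - B" "Y' \<in> Q a'" using p' pa' by (auto simp: P_def)
      have "a' # rep Y' \<in> cls (a # rep Y)" using eq cls_mem[of "a' # rep Y'"] by (simp add: h_def pa pa')
      then have tr: "trace_eq E (a # rep Y) (a' # rep Y')" by (simp add: cls_def)
      have aa: "a = a'"
      proof (rule ccontr)
        assume ne: "a \<noteq> a'"
        have "first_ok E (a # rep Y) a'" using tfirst[OF tr, of a'] first_ok_hd[of E a' "rep Y'"] by simp
        then have e1: "E a a'" and f1: "first_ok E (rep Y) a'" using ne by (auto simp: first_ok_Cons)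
        have "first_ok E (a' # rep Y') a" using tfirst[OF tr, of a] first_ok_hd[of E a "rep Y"] by simp
        then have e2: "E a' a" and f2: "first_ok E (rep Y') a" using ne by (auto simp: first_ok_Cons)
        have "a' \<notin> Ba rk B a" using a(2) f1 by (auto simp: Q_def)
        then have l1: "\<not> rk a' < rk a" using e1 by (simp add: Ba_def)
        have "a \<notin> Ba rk B a'" using a'(2) f2 by (auto simp: Q_def)
        then have l2: "\<not> rk a < rk a'" using e2 by (simp add: Ba_def)
        have "rk a = rk a'" using l1 l2 by simp
        then show False using inj a(1) a'(1) ne by (auto dest: inj_onD)
      qed
      then have "trace_eq E (rep Y) (rep Y')" using tr tcancel by simp
      then have "cls (rep Y) = cls (rep Y')" by (rule cls_eqI)
      then have "Y = Y'" using Cls_rep(3)[OF QC[OF a(2)]] Cls_rep(3)[OF QC[OF a'(2)]] by simp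
      then show "p = p'" using aa pa pa' by simp
    qed
  next
    show "h ` P = S"
    proof
      show "h ` P \<subseteq> S"
      proof
        fix X assume "X \<in> h ` P"
        then obtain a Y where a: "a \<in> V - B" "Y \<in> Q a" and X: "X = cls (a # rep Y)"
          by (auto simp: P_def h_def)
        have Y: "Y \<in> monoid_elems_len n E k" using QC[OF a(2)] .
        have w: "a # rep Y \<in> words n" "length (a # rep Y) = Suc k"
          using Cls_rep[OF Y] a(1) by (auto simp: words_def)
        have XC: "X \<in> monoid_elems_len n E (Suc k)" using w X Cls_eq by auto
        have tX: "trace_eq E (a # rep Y) (rep X)" using rep_cls X by simp
        have "\<not> first_ok E (rep X) b" if b: "b \<in> B" for b
        proof
          assume "first_ok E (rep X) b"
          then have "first_ok E (a # rep Y) b" using tfirst[OF tX] by simp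
          moreover have "a \<noteq> b" using a(1) b by auto
          ultimately have "E a b" "first_ok E (rep Y) b" by (auto simp: first_ok_Cons)
          moreover have "b \<in> Ba rk B a" using b \<open>E a b\<close> by (simp add: Ba_def)
          ultimately show False using a(2) by (auto simp: Q_def)
        qed
        then show "X \<in> S" using XC by (simp add: S_def)
      qed
    next
      show "S \<subseteq> h ` P"
      proof
        fix X assume X: "X \<in> S"
        then have XC: "X \<in> monoid_elems_len n E (Suc k)" and nb: "\<forall>b\<in>B. \<not> first_ok E (rep X) b"
          by (auto simp: S_def)
        define w where "w = rep X"
        have w: "w \<in> words n" "length w = Suc k" "cls w = X" using Cls_rep[OF XC] by (simp_all add: w_def)
        define F where "F = {a. first_ok E w a}"
        have Ffin: "finite F" unfolding F_def using first_ok_set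
          by (metis finite_set finite_subset mem_Collect_eq subsetI)
        have Fne: "F \<noteq> {}"
        proof -
          obtain c w' where "w = c # w'" using w(2) by (cases w) auto
          then show ?thesis unfolding F_def using first_ok_hd by auto
        qed
        obtain a where aF: "a \<in> F" and amin: "\<forall>b\<in>F. rk a \<le> rk b"
        proof -
          have "Min (rk ` F) \<in> rk ` F" using Ffin Fne by simp
          then obtain a where "a \<in> F" "rk a = Min (rk ` F)" by auto
          moreover have "\<forall>b\<in>F. Min (rk ` F) \<le> rk b" using Ffin by simp
          ultimately show ?thesis using that by auto
        qed
        have fa: "first_ok E w a" using aF by (simp add: F_def)
        have aV: "a \<in> V" using first_ok_set[OF fa] w(1) by (auto simp: words_def)
        have aB: "a \<notin> B" using nb fa by (auto simp: w_def)
        define q where "q = remove1 a w"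
        have tq: "trace_eq E w (a # q)" unfolding q_def by (rule first_ok_move[OF fa])
        have qw: "q \<in> words n" using w(1) unfolding q_def words_def by (auto dest: notin_set_remove1)
        have ql: "length q = k" using w(2) first_ok_set[OF fa] by (simp add: q_def length_remove1)
        define Y where "Y = cls q"
        have YC: "Y \<in> monoid_elems_len n E k" using qw ql Cls_eq by (auto simp: Y_def)
        have tY: "trace_eq E q (rep Y)" using rep_cls by (simp add: Y_def)
        have "\<not> first_ok E (rep Y) b" if b: "b \<in> Ba rk B a" for b
        proof
          assume "first_ok E (rep Y) b"
          then have fq: "first_ok E q b" using tfirst[OF tY] by simp
          have e: "E a b" using b by (simp add: Ba_def)
          have "first_ok E (a # q) b" using fq e by (simp add: first_ok_Cons)
          then have fw: "first_ok E w b" using tfirst[OF tq] by simp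
          then have "b \<notin> B" using nb by (auto simp: w_def)
          then have "rk b < rk a" using b by (simp add: Ba_def)
          moreover have "rk a \<le> rk b" using amin fw by (simp add: F_def)
          ultimately show False by simp
        qed
        then have "Y \<in> Q a" using YC by (simp add: Q_def)
        then have inP: "(a, Y) \<in> P" using aV aB by (simp add: P_def)
        have "trace_eq E (a # rep Y) (a # q)" using trace_eq_Cons[OF tsym[OF tY]] .
        then have "trace_eq E (a # rep Y) w" using tsym[OF tq] by (rule trace_eq_trans)
        then have "h (a, Y) = X" using cls_eqI w(3) by (simp add: h_def)
        then show "X \<in> h ` P" using inP by (metis image_eqI)
      qed
    qed
  qed
  have "R (Suc k) g B = sum (\<lambda>X. xg g (rep X)) S" by (simp add: R_def S_def)
  also have "\<dots> = (\<Sum>p\<in>P. xg g (rep (h p)))"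
    using sum.reindex_bij_betw[OF bij, of "\<lambda>X. xg g (rep X)"] by simp
  also have "\<dots> = (\<Sum>p\<in>P. xg (adjoint (T (fst p)) g) (rep (snd p)))"
  proof (rule sum.cong[OF refl])
    fix p assume p: "p \<in> P"
    obtain a Y where pa: "p = (a, Y)" by fastforce
    have a: "a \<in> V" "Y \<in> monoid_elems_len n E k" using p QC by (auto simp: P_def pa)
    have "xg g (rep (h p)) = xg g (a # rep Y)"
      using xg_trace[OF rep_cls[of "a # rep Y"]] by (simp add: h_def pa)
    also have "\<dots> = xg (adjoint (T a) g) (rep Y)"
      using xg_Cons[OF a(1)] Cls_rep(1)[OF a(2)] by (simp add: words_def)
    finally show "xg g (rep (h p)) = xg (adjoint (T (fst p)) g) (rep (snd p))" by (simp add: pa)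
  qed
  also have "\<dots> = (\<Sum>a\<in>V - B. \<Sum>Y\<in>Q a. xg (adjoint (T a) g) (rep Y))"
  proof -
    have fQ: "\<forall>a\<in>V - B. finite (Q a)" using Cls_finite by (auto simp: Q_def)
    have "(\<Sum>p\<in>P. xg (adjoint (T (fst p)) g) (rep (snd p))) = (\<Sum>(a, Y)\<in>P. xg (adjoint (T a) g) (rep Y))"
      by (simp add: case_prod_beta)
    also have "\<dots> = (\<Sum>a\<in>V - B. \<Sum>Y\<in>Q a. xg (adjoint (T a) g) (rep Y))"
      unfolding P_def using sum.Sigma[of "V - B" Q "\<lambda>a Y. xg (adjoint (T a) g) (rep Y)"] fQ by simp
    finally show ?thesis .
  qed
  also have "\<dots> = (\<Sum>a \<in> V - B. R k (adjoint (T a) g) (Ba rk B a))"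
    by (simp add: R_def Q_def)
  finally show ?thesis .
qed

end

lemma sum_Pow_cancel:
  fixes f :: "nat set \<Rightarrow> real"
  assumes fin: "finite S" and b: "b \<in> S" and neg: "\<And>K. K \<subseteq> S - {b} \<Longrightarrow> f (insert b K) = - f K"
  shows "(\<Sum>K\<in>Pow S. f K) = 0"
proof -
  define A where "A = S - {b}"
  have S: "S = insert b A" "b \<notin> A" using b by (auto simp: A_def)
  have finA: "finite A" using fin by (simp add: A_def)
  have "Pow S = Pow A \<union> insert b ` Pow A" using S(1) by (simp add: Pow_insert)
  moreover have "Pow A \<inter> insert b ` Pow A = {}" using S(2) by blast
  ultimately have "(\<Sum>K\<in>Pow S. f K) = (\<Sum>K\<in>Pow A. f K) + (\<Sum>K\<in>insert b ` Pow A. f K)"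
    using finA by (simp add: sum.union_disjoint)
  also have "(\<Sum>K\<in>insert b ` Pow A. f K) = (\<Sum>K\<in>Pow A. f (insert b K))"
  proof (rule sum.reindex[unfolded o_def])
    show "inj_on (insert b) (Pow A)"
    proof (rule inj_onI)
      fix x y assume x: "x \<in> Pow A" and y: "y \<in> Pow A" and e: "insert b x = insert b y"
      have "x = insert b x - {b}" using x S(2) by blast
      also have "\<dots> = insert b y - {b}" using e by simp
      also have "\<dots> = y" using y S(2) by blast
      finally show "x = y" .
    qed
  qed
  also have "\<dots> = (\<Sum>K\<in>Pow A. - f K)"
  proof (rule sum.cong[OF refl])
    fix K assume "K \<in> Pow A"
    then have "K \<subseteq> S - {b}" by (simp add: A_def)
    then show "f (insert b K) = - f K" by (rule neg)
  qed
  finally show ?thesis by (simp add: sum_negf)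
qed

lemma alt_sum:
  fixes S :: "nat set"
  assumes fin: "finite S"
  shows "(\<Sum>K\<in>Pow S. (-1::real) ^ card (S - K)) = (if S = {} then 1 else 0)"
proof (cases "S = {}")
  case True then show ?thesis by simp
next
  case False
  then obtain b where b: "b \<in> S" by blast
  have "(\<Sum>K\<in>Pow S. (-1::real) ^ card (S - K)) = 0"
  proof (rule sum_Pow_cancel[OF fin b])
    fix K assume K: "K \<subseteq> S - {b}"
    have eq: "S - K = insert b (S - insert b K)" using K b by auto
    have nb: "b \<notin> S - insert b K" by simp
    have fi: "finite (S - insert b K)" using fin by simp
    have "card (S - K) = card (insert b (S - insert b K))" using eq by (rule arg_cong)
    also have "\<dots> = Suc (card (S - insert b K))" by (rule card_insert_disjoint[OF fi nb])
    finally have "card (S - K) = Suc (card (S - insert b K))" .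
    then show "(-1::real) ^ card (S - insert b K) = - ((-1) ^ card (S - K))" by simp
  qed
  then show ?thesis using False by simp
qed

context ctx begin

definition Cl :: "nat set \<Rightarrow> nat set set" where "Cl C = {K. K \<subseteq> C \<and> is_clique E K}"
definition NC :: "nat set \<Rightarrow> nat set \<Rightarrow> nat set" where "NC C K = {j \<in> C. \<forall>k\<in>K. E j k}"
definition QU :: "nat set \<Rightarrow> nat set \<Rightarrow> nat set set" where "QU C K = {U. U \<subseteq> NC C K \<and> is_clique E U}"
definition yv :: "'h \<Rightarrow> nat set \<Rightarrow> real" where "yv g K = (norm (adjoint (TS K) g))\<^sup>2"
definition zz :: "nat set \<Rightarrow> 'h \<Rightarrow> nat set \<Rightarrow> real" where
  "zz C g K = (\<Sum>U \<in> QU C K. (-1) ^ card U * yv g (K \<union> U))"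

lemma Cl_finite: "finite C \<Longrightarrow> finite (Cl C)"
  unfolding Cl_def by (rule finite_subset[of _ "Pow C"]) auto

lemma QU_finite: "finite C \<Longrightarrow> finite (QU C K)"
  unfolding QU_def NC_def by (rule finite_subset[of _ "Pow C"]) auto

lemma clique_reindex:
  fixes F :: "nat set \<Rightarrow> nat set \<Rightarrow> real"
  assumes fin: "finite C"
  shows "(\<Sum>K\<in>Cl C. \<Sum>U\<in>QU C K. F K U) = (\<Sum>S\<in>Cl C. \<Sum>K\<in>Pow S. F K (S - K))"
proof -
  define A where "A = Sigma (Cl C) (QU C)"
  define B where "B = Sigma (Cl C) Pow"
  define f where "f = (\<lambda>(S::nat set, K::nat set). (K, S - K))"
  define f' where "f' = (\<lambda>(K::nat set, U::nat set). (K \<union> U, K))"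
  have disj: "K \<inter> U = {}" if "U \<in> QU C K" for K U
    using that irrefl unfolding QU_def NC_def by blast
  have bij: "bij_betw f B A"
  proof (rule bij_betw_byWitness[where f'=f'])
    show "\<forall>a\<in>B. f' (f a) = a" unfolding B_def f_def f'_def by auto
    show "\<forall>a\<in>A. f (f' a) = a" unfolding A_def f_def f'_def using disj by auto
    show "f ` B \<subseteq> A"
    proof
      fix p assume "p \<in> f ` B"
      then obtain S K where p: "p = (K, S - K)" and S: "S \<in> Cl C" and K: "K \<subseteq> S"
        unfolding B_def f_def by auto
      have "K \<in> Cl C" using S K unfolding Cl_def is_clique_def by auto
      moreover have "S - K \<in> QU C K"
      proof -
        have "S - K \<subseteq> NC C K"
        proof
          fix j assume j: "j \<in> S - K"
          have "j \<in> C" using j S by (auto simp: Cl_def)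
          moreover have "E j k" if k: "k \<in> K" for k
          proof -
            have "k \<in> S" "j \<noteq> k" using k K j by auto
            then show ?thesis using j S unfolding Cl_def is_clique_def by auto
          qed
          ultimately show "j \<in> NC C K" by (simp add: NC_def)
        qed
        moreover have "is_clique E (S - K)" using S unfolding Cl_def is_clique_def by auto
        ultimately show ?thesis by (simp add: QU_def)
      qed
      ultimately show "p \<in> A" using p by (simp add: A_def)
    qed
    show "f' ` A \<subseteq> B"
    proof
      fix p assume "p \<in> f' ` A"
      then obtain K U where p: "p = (K \<union> U, K)" and K: "K \<in> Cl C" and U: "U \<in> QU C K"
        unfolding A_def f'_def by auto
      have KC: "K \<subseteq> C" "is_clique E K" using K by (auto simp: Cl_def)
      have UC: "U \<subseteq> C" "is_clique E U" "\<And>u k. u \<in> U \<Longrightarrow> k \<in> K \<Longrightarrow> E u k"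
        using U by (auto simp: QU_def NC_def)
      have "is_clique E (K \<union> U)"
        unfolding is_clique_def
      proof (intro ballI impI)
        fix i j assume i: "i \<in> K \<union> U" and j: "j \<in> K \<union> U" and ij: "i \<noteq> j"
        show "E i j"
        proof (cases "i \<in> K")
          case True
          show ?thesis
          proof (cases "j \<in> K")
            case True then show ?thesis using \<open>i \<in> K\<close> ij KC(2) unfolding is_clique_def by blast
          next
            case False then have "j \<in> U" using j by blast
            then show ?thesis using UC(3)[of j i] \<open>i \<in> K\<close> sym by blast
          qed
        next
          case False then have iU: "i \<in> U" using i by blast
          show ?thesis
          proof (cases "j \<in> K")
            case True then show ?thesis using UC(3)[OF iU] by blast
          next
            case False then have "j \<in> U" using j by blast
            then show ?thesis using iU ij UC(2) unfolding is_clique_def by blast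
          qed
        qed
      qed
      then have "K \<union> U \<in> Cl C" using KC UC by (simp add: Cl_def)
      then show "p \<in> B" using p by (simp add: B_def)
    qed
  qed
  have "(\<Sum>K\<in>Cl C. \<Sum>U\<in>QU C K. F K U) = (\<Sum>(K, U)\<in>A. F K U)"
    unfolding A_def using sum.Sigma[of "Cl C" "QU C" F] Cl_finite[OF fin] QU_finite[OF fin] by simp
  also have "\<dots> = (\<Sum>p\<in>B. (\<lambda>(K, U). F K U) (f p))"
    using sum.reindex_bij_betw[OF bij, of "\<lambda>(K, U). F K U"] by simp
  also have "\<dots> = (\<Sum>(S, K)\<in>B. F K (S - K))"
    unfolding f_def by (simp add: case_prod_beta)
  also have "\<dots> = (\<Sum>S\<in>Cl C. \<Sum>K\<in>Pow S. F K (S - K))"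
    unfolding B_def using sum.Sigma[of "Cl C" Pow "\<lambda>S K. F K (S - K)"] Cl_finite[OF fin]
    by (simp add: Cl_def finite_subset[OF _ fin])
  finally show ?thesis .
qed

lemma yv_empty: "yv g {} = (norm g)\<^sup>2"
  unfolding yv_def by (simp add: adjoint_id_H)

lemma zz_sum:
  assumes fin: "finite C"
  shows "(\<Sum>K\<in>Cl C. zz C g K) = (norm g)\<^sup>2"
proof -
  have "(\<Sum>K\<in>Cl C. zz C g K) = (\<Sum>S\<in>Cl C. \<Sum>K\<in>Pow S. (-1) ^ card (S - K) * yv g (K \<union> (S - K)))"
    unfolding zz_def by (rule clique_reindex[OF fin])
  also have "\<dots> = (\<Sum>S\<in>Cl C. yv g S * (\<Sum>K\<in>Pow S. (-1) ^ card (S - K)))"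
  proof (rule sum.cong[OF refl])
    fix S assume S: "S \<in> Cl C"
    have "(\<Sum>K\<in>Pow S. (-1) ^ card (S - K) * yv g (K \<union> (S - K))) = (\<Sum>K\<in>Pow S. (-1) ^ card (S - K) * yv g S)"
    proof (rule sum.cong[OF refl])
      fix K assume "K \<in> Pow S"
      then have "K \<union> (S - K) = S" by auto
      then show "(-1) ^ card (S - K) * yv g (K \<union> (S - K)) = (-1) ^ card (S - K) * yv g S" by simp
    qed
    also have "\<dots> = yv g S * (\<Sum>K\<in>Pow S. (-1) ^ card (S - K))"
      by (simp add: sum_distrib_left mult.commute)
    finally show "(\<Sum>K\<in>Pow S. (-1) ^ card (S - K) * yv g (K \<union> (S - K))) = yv g S * (\<Sum>K\<in>Pow S. (-1) ^ card (S - K))" .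
  qed
  also have "\<dots> = (\<Sum>S\<in>Cl C. if S = {} then yv g S else 0)"
    by (intro sum.cong refl) (simp add: alt_sum Cl_def finite_subset[OF _ fin])
  also have "\<dots> = yv g {}"
    using Cl_finite[OF fin] by (subst sum.delta) (auto simp: Cl_def is_clique_def)
  finally show ?thesis by (simp add: yv_empty)
qed

end

lemma sign_flip:
  fixes S :: "nat set"
  assumes fin: "finite S" and b: "b \<in> S" and K: "K \<subseteq> S - {b}"
  shows "(-1::real) ^ card (S - insert b K) = - ((-1) ^ card (S - K))"
proof -
  have eq: "S - K = insert b (S - insert b K)" using K b by auto
  have nb: "b \<notin> S - insert b K" by simp
  have fi: "finite (S - insert b K)" using fin by simp
  have "card (S - K) = card (insert b (S - insert b K))" using eq by (rule arg_cong)
  also have "\<dots> = Suc (card (S - insert b K))" by (rule card_insert_disjoint[OF fi nb])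
  finally show ?thesis by simp
qed

context ctx begin

lemma comp_sub: "compl_component n E v \<subseteq> V"
  unfolding compl_component_def by auto

lemma zz_nonneg:
  assumes wb: "weak_brehmer n E T" and v: "v \<in> V" and K: "K \<in> Cl (compl_component n E v)"
  shows "zz (compl_component n E v) g K \<ge> 0"
proof -
  define C where "C = compl_component n E v"
  have CV: "C \<subseteq> V" unfolding C_def by (rule comp_sub)
  have KC: "K \<subseteq> C" "is_clique E K" using K by (auto simp: Cl_def C_def)
  have KV: "K \<subseteq> V" using KC CV by blast
  define N where "N = {j \<in> C. \<forall>k\<in>K. E j k}"
  have NV: "N \<subseteq> V" using CV by (auto simp: N_def)
  have finN: "finite N" using NV finite_subset by blast
  define h' where "h' = adjoint (TS K) g"
  have wb1: "0 \<le> (\<Sum>U \<in> Pow N. (-1) ^ card U *\<^sub>R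
                    T_join n E T ((\<lambda>i. [i]) ` U) (adjoint (T_join n E T ((\<lambda>i. [i]) ` U)) h')) \<bullet> h'"
    using wb v KC unfolding weak_brehmer_def Let_def N_def C_def by blast
  have trm: "((-1) ^ card U *\<^sub>R T_join n E T ((\<lambda>i. [i]) ` U) (adjoint (T_join n E T ((\<lambda>i. [i]) ` U)) h')) \<bullet> h'
      = (if is_clique E U then (-1) ^ card U * yv g (K \<union> U) else 0)" if U: "U \<in> Pow N" for U
  proof (cases "is_clique E U")
    case True
    have UV: "U \<subseteq> V" using U NV by blast
    have disj: "K \<inter> U = {}" using U irrefl by (auto simp: N_def)
    have cl: "is_clique E (K \<union> U)"
      using KC(2) True U sym unfolding is_clique_def N_def by blast
    have "T_join n E T ((\<lambda>i. [i]) ` U) (adjoint (T_join n E T ((\<lambda>i. [i]) ` U)) h') \<bullet> h'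
        = (norm (adjoint (TS U) h'))\<^sup>2"
      using T_join_clique[OF UV True] adjoint_sq[OF TS_bl[OF UV]] by simp
    also have "adjoint (TS U) h' = adjoint (TS (K \<union> U)) g"
    proof -
      have "adjoint (TS (K \<union> U)) = adjoint (TS U) \<circ> adjoint (TS K)"
        using TS_union[of K U] KV UV cl disj adjoint_comp[OF TS_bl[OF KV] TS_bl[OF UV]] by simp
      then show ?thesis by (simp add: h'_def)
    qed
    finally show ?thesis using True by (simp add: yv_def)
  next
    case False
    have UV: "U \<subseteq> V" using U NV by blast
    show ?thesis using T_join_nonclique[OF UV False] False by simp
  qed
  have "(\<Sum>U \<in> Pow N. (-1) ^ card U *\<^sub>R
                    T_join n E T ((\<lambda>i. [i]) ` U) (adjoint (T_join n E T ((\<lambda>i. [i]) ` U)) h')) \<bullet> h'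
     = (\<Sum>U \<in> Pow N. (if is_clique E U then (-1) ^ card U * yv g (K \<union> U) else 0))"
    unfolding inner_sum_left using trm by (intro sum.cong refl) simp
  also have "\<dots> = (\<Sum>U \<in> {U \<in> Pow N. is_clique E U}. (-1) ^ card U * yv g (K \<union> U))"
    using sum.inter_filter[of "Pow N" "\<lambda>U. (-1) ^ card U * yv g (K \<union> U)" "is_clique E"] finN by simp
  also have "{U \<in> Pow N. is_clique E U} = QU C K" by (auto simp: QU_def NC_def N_def)
  finally show ?thesis using wb1 by (simp add: zz_def C_def)
qed

lemma yv_shift:
  assumes CV: "C \<subseteq> V" and a: "a \<in> C" and S: "S \<in> Cl (NC C {a})"
  shows "yv (adjoint (T a) g) S = yv g (insert a S)"
proof -
  have SC: "S \<subseteq> C" "is_clique E S" "\<And>j. j \<in> S \<Longrightarrow> E j a" using S by (auto simp: Cl_def NC_def)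
  have aS: "a \<notin> S" using SC(3) irrefl by blast
  have aV: "a \<in> V" using a CV by blast
  have SV: "S \<subseteq> V" using SC CV by blast
  have cl: "is_clique E (insert a S)"
    using SC(2,3) sym unfolding is_clique_def by blast
  have "adjoint (TS (insert a S)) = adjoint (TS S) \<circ> adjoint (T a)"
    using TS_insert[of a S] aV SV cl aS adjoint_comp[OF bl_T[OF aV] TS_bl[OF SV]] by simp
  then show ?thesis by (simp add: yv_def)
qed

lemma zz_shift:
  fixes \<phi> :: "nat set \<Rightarrow> real"
  assumes fin: "finite C" and CV: "C \<subseteq> V" and a: "a \<in> C"
  shows "(\<Sum>K'\<in>Cl C. zz C (adjoint (T a) g) K' * \<phi> (K' \<inter> NC C {a}))
       = (\<Sum>K\<in>{K\<in>Cl C. a \<in> K}. zz C g K * \<phi> (K - {a}))"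
proof -
  define Na where "Na = NC C {a}"
  define g' where "g' = adjoint (T a) g"
  have NaC: "Na \<subseteq> C" by (auto simp: Na_def NC_def)
  have finNa: "finite Na" using NaC fin finite_subset by blast
  have ClNa: "Cl Na \<subseteq> Cl C" using NaC by (auto simp: Cl_def)
  define I where "I = (\<lambda>S. \<Sum>K\<in>Pow S. (-1) ^ card (S - K) * \<phi> (K \<inter> Na))"
  define I' where "I' = (\<lambda>S. \<Sum>K\<in>Pow S. (-1) ^ card (S - K) * \<phi> K)"
  have L1: "(\<Sum>K'\<in>Cl C. zz C g' K' * \<phi> (K' \<inter> Na)) = (\<Sum>S\<in>Cl C. yv g' S * I S)"
  proof -
    have "(\<Sum>K'\<in>Cl C. zz C g' K' * \<phi> (K' \<inter> Na))
        = (\<Sum>K'\<in>Cl C. \<Sum>U\<in>QU C K'. (-1) ^ card U * yv g' (K' \<union> U) * \<phi> (K' \<inter> Na))"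
      unfolding zz_def by (simp add: sum_distrib_right)
    also have "\<dots> = (\<Sum>S\<in>Cl C. \<Sum>K\<in>Pow S. (-1) ^ card (S - K) * yv g' (K \<union> (S - K)) * \<phi> (K \<inter> Na))"
      by (rule clique_reindex[OF fin])
    also have "\<dots> = (\<Sum>S\<in>Cl C. yv g' S * I S)"
    proof (rule sum.cong[OF refl])
      fix S assume "S \<in> Cl C"
      have "(\<Sum>K\<in>Pow S. (-1) ^ card (S - K) * yv g' (K \<union> (S - K)) * \<phi> (K \<inter> Na))
          = (\<Sum>K\<in>Pow S. yv g' S * ((-1) ^ card (S - K) * \<phi> (K \<inter> Na)))"
      proof (rule sum.cong[OF refl])
        fix K assume "K \<in> Pow S"
        then have "K \<union> (S - K) = S" by auto
        then show "(-1) ^ card (S - K) * yv g' (K \<union> (S - K)) * \<phi> (K \<inter> Na)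
            = yv g' S * ((-1) ^ card (S - K) * \<phi> (K \<inter> Na))" by simp
      qed
      also have "\<dots> = yv g' S * I S" by (simp add: I_def sum_distrib_left)
      finally show "(\<Sum>K\<in>Pow S. (-1) ^ card (S - K) * yv g' (K \<union> (S - K)) * \<phi> (K \<inter> Na)) = yv g' S * I S" .
    qed
    finally show ?thesis .
  qed
  have L2: "I S = 0" if S: "S \<in> Cl C - Cl Na" for S
  proof -
    have SC: "S \<subseteq> C" "is_clique E S" using S by (auto simp: Cl_def)
    have "\<not> S \<subseteq> Na" using S SC by (auto simp: Cl_def)
    then obtain b where b: "b \<in> S" "b \<notin> Na" by blast
    have finS: "finite S" using SC fin finite_subset by blast
    show ?thesis unfolding I_def
    proof (rule sum_Pow_cancel[OF finS b(1)])
      fix K assume K: "K \<subseteq> S - {b}"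
      have "insert b K \<inter> Na = K \<inter> Na" using b(2) by auto
      then show "(-1) ^ card (S - insert b K) * \<phi> (insert b K \<inter> Na) = - ((-1) ^ card (S - K) * \<phi> (K \<inter> Na))"
        using sign_flip[OF finS b(1) K] by simp
    qed
  qed
  have L3: "(\<Sum>S\<in>Cl C. yv g' S * I S) = (\<Sum>S\<in>Cl Na. yv g' S * I' S)"
  proof -
    have "(\<Sum>S\<in>Cl C. yv g' S * I S) = (\<Sum>S\<in>Cl Na. yv g' S * I S)"
      using L2 by (intro sum.mono_neutral_right[OF Cl_finite[OF fin] ClNa]) simp
    also have "\<dots> = (\<Sum>S\<in>Cl Na. yv g' S * I' S)"
    proof (rule sum.cong[OF refl])
      fix S assume "S \<in> Cl Na"
      then have "S \<subseteq> Na" by (simp add: Cl_def)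
      then have "I S = I' S" unfolding I_def I'_def by (intro sum.cong refl) (auto simp: Int_absorb2)
      then show "yv g' S * I S = yv g' S * I' S" by simp
    qed
    finally show ?thesis .
  qed
  have R1: "(\<Sum>K\<in>{K\<in>Cl C. a \<in> K}. zz C g K * \<phi> (K - {a})) = (\<Sum>J\<in>Cl Na. zz C g (insert a J) * \<phi> J)"
  proof -
    have nJ: "a \<notin> J" if "J \<in> Cl Na" for J using that irrefl by (auto simp: Cl_def Na_def NC_def)
    have bij: "bij_betw (insert a) (Cl Na) {K\<in>Cl C. a \<in> K}"
    proof (rule bij_betw_byWitness[where f'="\<lambda>K. K - {a}"])
      show "\<forall>J\<in>Cl Na. insert a J - {a} = J" using nJ by auto
      show "\<forall>K\<in>{K \<in> Cl C. a \<in> K}. insert a (K - {a}) = K" by auto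
      show "insert a ` Cl Na \<subseteq> {K \<in> Cl C. a \<in> K}"
      proof
        fix K assume "K \<in> insert a ` Cl Na"
        then obtain J where K: "K = insert a J" and J: "J \<in> Cl Na" by blast
        have Jp: "J \<subseteq> C" "is_clique E J" "\<And>j. j \<in> J \<Longrightarrow> E j a"
          using J by (auto simp: Cl_def Na_def NC_def)
        have "is_clique E (insert a J)" using Jp(2,3) sym unfolding is_clique_def by blast
        then show "K \<in> {K \<in> Cl C. a \<in> K}" using K Jp a by (simp add: Cl_def)
      qed
      show "(\<lambda>K. K - {a}) ` {K \<in> Cl C. a \<in> K} \<subseteq> Cl Na"
      proof
        fix J assume "J \<in> (\<lambda>K. K - {a}) ` {K \<in> Cl C. a \<in> K}"
        then obtain K where J: "J = K - {a}" and K: "K \<in> Cl C" "a \<in> K" by blast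
        have "J \<subseteq> Na" using K unfolding J Na_def NC_def Cl_def is_clique_def by auto
        moreover have "is_clique E J" using K unfolding J Cl_def is_clique_def by auto
        ultimately show "J \<in> Cl Na" by (simp add: Cl_def)
      qed
    qed
    have "(\<Sum>J\<in>Cl Na. zz C g (insert a J) * \<phi> (insert a J - {a})) = (\<Sum>K\<in>{K\<in>Cl C. a \<in> K}. zz C g K * \<phi> (K - {a}))"
      by (rule sum.reindex_bij_betw[OF bij])
    moreover have "(\<Sum>J\<in>Cl Na. zz C g (insert a J) * \<phi> (insert a J - {a})) = (\<Sum>J\<in>Cl Na. zz C g (insert a J) * \<phi> J)"
      using nJ by (intro sum.cong refl) auto
    ultimately show ?thesis by simp
  qed
  have R2: "zz C g (insert a J) = (\<Sum>U\<in>QU Na J. (-1) ^ card U * yv g (insert a (J \<union> U)))" for J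
  proof -
    have "NC C (insert a J) = NC Na J" by (auto simp: NC_def Na_def)
    then have "QU C (insert a J) = QU Na J" by (simp add: QU_def)
    then show ?thesis by (simp add: zz_def)
  qed
  have R3: "(\<Sum>J\<in>Cl Na. zz C g (insert a J) * \<phi> J) = (\<Sum>S\<in>Cl Na. yv g (insert a S) * I' S)"
  proof -
    have "(\<Sum>J\<in>Cl Na. zz C g (insert a J) * \<phi> J)
        = (\<Sum>J\<in>Cl Na. \<Sum>U\<in>QU Na J. (-1) ^ card U * yv g (insert a (J \<union> U)) * \<phi> J)"
      unfolding R2 by (simp add: sum_distrib_right)
    also have "\<dots> = (\<Sum>S\<in>Cl Na. \<Sum>K\<in>Pow S. (-1) ^ card (S - K) * yv g (insert a (K \<union> (S - K))) * \<phi> K)"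
      by (rule clique_reindex[OF finNa])
    also have "\<dots> = (\<Sum>S\<in>Cl Na. yv g (insert a S) * I' S)"
    proof (rule sum.cong[OF refl])
      fix S assume "S \<in> Cl Na"
      have "(\<Sum>K\<in>Pow S. (-1) ^ card (S - K) * yv g (insert a (K \<union> (S - K))) * \<phi> K)
          = (\<Sum>K\<in>Pow S. yv g (insert a S) * ((-1) ^ card (S - K) * \<phi> K))"
      proof (rule sum.cong[OF refl])
        fix K assume "K \<in> Pow S"
        then have "K \<union> (S - K) = S" by auto
        then show "(-1) ^ card (S - K) * yv g (insert a (K \<union> (S - K))) * \<phi> K
            = yv g (insert a S) * ((-1) ^ card (S - K) * \<phi> K)" by simp
      qed
      also have "\<dots> = yv g (insert a S) * I' S" by (simp add: I'_def sum_distrib_left)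
      finally show "(\<Sum>K\<in>Pow S. (-1) ^ card (S - K) * yv g (insert a (K \<union> (S - K))) * \<phi> K) = yv g (insert a S) * I' S" .
    qed
    finally show ?thesis .
  qed
  have Y: "(\<Sum>S\<in>Cl Na. yv g' S * I' S) = (\<Sum>S\<in>Cl Na. yv g (insert a S) * I' S)"
    using yv_shift[OF CV a] by (simp add: g'_def Na_def)
  show ?thesis using L1 L3 R1 R3 Y by (simp add: g'_def Na_def)
qed

end

definition MC :: "nat \<Rightarrow> nat \<Rightarrow> nat" where "MC w l = (w + l - 1) choose l"

lemma MC_0[simp]: "MC w 0 = 1" by (simp add: MC_def)

lemma MC_pascal: "MC (Suc w) (Suc k) = MC w (Suc k) + MC (Suc w) k"
proof -
  have "MC (Suc w) (Suc k) = Suc (w + k) choose Suc k" by (simp add: MC_def)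
  also have "\<dots> = (w + k choose k) + (w + k choose Suc k)" by simp
  also have "(w + k choose k) = MC (Suc w) k" by (simp add: MC_def)
  also have "(w + k choose Suc k) = MC w (Suc k)" by (simp add: MC_def)
  finally show ?thesis by simp
qed

lemma MC_mono: "w \<le> w' \<Longrightarrow> MC w l \<le> MC w' l"
  unfolding MC_def by (rule binomial_right_mono) simp

lemma MC_sum: "MC (A + D) (Suc k) = MC A (Suc k) + (\<Sum>i\<in>{1..D}. MC (A + i) k)"
proof (induction D)
  case 0 then show ?case by simp
next
  case (Suc D)
  have "MC (A + Suc D) (Suc k) = MC (A + D) (Suc k) + MC (A + Suc D) k"
    using MC_pascal[of "A + D" k] by simp
  also have "\<dots> = MC A (Suc k) + (\<Sum>i\<in>{1..D}. MC (A + i) k) + MC (A + Suc D) k"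
    using Suc.IH by simp
  also have "\<dots> = MC A (Suc k) + (\<Sum>i\<in>{1..Suc D}. MC (A + i) k)"
    by simp
  finally show ?case .
qed

lemma rank_inj:
  fixes P :: "nat set"
  assumes "finite P" "a \<in> P" "a' \<in> P" "card {b\<in>P. b < a} = card {b\<in>P. b < a'}"
  shows "a = a'"
proof (rule ccontr)
  assume ne: "a \<noteq> a'"
  {
    fix x y assume x: "x \<in> P" and y: "y \<in> P" and xy: "x < y"
    have "{b\<in>P. b < x} \<subset> {b\<in>P. b < y}" using x xy by auto
    moreover have "finite {b\<in>P. b < y}" using assms(1) by simp
    ultimately have "card {b\<in>P. b < x} < card {b\<in>P. b < y}" by (simp add: psubset_card_mono)
  }
  note * = this
  show False
  proof (cases "a < a'")
    case True then show ?thesis using *[of a a'] assms(2-4) by simp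
  next
    case False then have "a' < a" using ne by simp
    then show ?thesis using *[of a' a] assms(2-4) by simp
  qed
qed

lemma rank_less:
  fixes P :: "nat set"
  assumes "finite P" "a \<in> P"
  shows "card {b\<in>P. b < a} < card P"
proof -
  have "{b\<in>P. b < a} \<subset> P" using assms(2) by auto
  then show ?thesis using assms(1) by (simp add: psubset_card_mono)
qed

lemma count_bound:
  fixes P :: "nat set"
  assumes fin: "finite P" and tD: "card P \<le> D"
  shows "(\<Sum>a\<in>P. real (MC (A + (D - card {b\<in>P. b < a})) k)) + real (MC A (Suc k)) \<le> real (MC (A + D) (Suc k))"
proof -
  define r where "r = (\<lambda>a. card {b\<in>P. b < a})"
  define f where "f = (\<lambda>a. D - r a)"
  have rl: "r a < card P" if "a \<in> P" for a using rank_less[OF fin that] by (simp add: r_def)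
  have inj: "inj_on f P"
  proof (rule inj_onI)
    fix a a' assume a: "a \<in> P" and a': "a' \<in> P" and e: "f a = f a'"
    have "r a = r a'" using e rl[OF a] rl[OF a'] tD by (simp add: f_def)
    then show "a = a'" using rank_inj[OF fin a a'] by (simp add: r_def)
  qed
  have img: "f ` P \<subseteq> {1..D}"
  proof
    fix i assume "i \<in> f ` P"
    then obtain a where a: "a \<in> P" "i = f a" by blast
    have "r a < card P" using rl[OF a(1)] .
    then have "1 \<le> D - r a" "D - r a \<le> D" using tD by linarith+
    moreover have "i = D - r a" using a(2) unfolding f_def by simp
    ultimately show "i \<in> {1..D}" by simp
  qed
  have "(\<Sum>a\<in>P. real (MC (A + (D - r a)) k)) = (\<Sum>i\<in>f ` P. real (MC (A + i) k))"
    using sum.reindex[OF inj, of "\<lambda>i. real (MC (A + i) k)"] by (simp add: f_def o_def)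
  also have "\<dots> \<le> (\<Sum>i\<in>{1..D}. real (MC (A + i) k))"
    by (rule sum_mono2[OF _ img]) auto
  finally have "(\<Sum>a\<in>P. real (MC (A + (D - r a)) k)) \<le> (\<Sum>i\<in>{1..D}. real (MC (A + i) k))" .
  moreover have "real (MC (A + D) (Suc k)) = real (MC A (Suc k)) + (\<Sum>i\<in>{1..D}. real (MC (A + i) k))"
    by (simp only: MC_sum of_nat_add of_nat_sum)
  ultimately show ?thesis by (simp add: r_def)
qed


context ctx begin

definition Rc :: "nat \<Rightarrow> nat \<Rightarrow> bool" where
  "Rc = (\<lambda>i j. i \<in> {1..n} \<and> j \<in> {1..n} \<and> i \<noteq> j \<and> \<not> E i j)"

lemma comp_iff: "u \<in> compl_component n E a \<longleftrightarrow> u \<in> V \<and> Rc\<^sup>*\<^sup>* a u"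
  unfolding compl_component_def Rc_def by simp

lemma Rc_sym: "Rc i j \<Longrightarrow> Rc j i"
  unfolding Rc_def using sym by blast

lemma Rc_rtr_sym: "Rc\<^sup>*\<^sup>* a b \<Longrightarrow> Rc\<^sup>*\<^sup>* b a"
proof (induction rule: rtranclp_induct)
  case base then show ?case by simp
next
  case (step y z)
  then show ?case using Rc_sym[of y z] by (meson converse_rtranclp_into_rtranclp)
qed

lemma comp_self: "a \<in> V \<Longrightarrow> a \<in> compl_component n E a"
  by (simp add: comp_iff)

lemma comp_eq: "a \<in> V \<Longrightarrow> b \<in> compl_component n E a \<Longrightarrow> compl_component n E b = compl_component n E a"
proof -
  assume a: "a \<in> V" and b: "b \<in> compl_component n E a"
  then have ab: "Rc\<^sup>*\<^sup>* a b" by (simp add: comp_iff)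
  then have ba: "Rc\<^sup>*\<^sup>* b a" by (rule Rc_rtr_sym)
  show ?thesis
  proof (intro set_eqI iffI)
    fix u assume "u \<in> compl_component n E b"
    then show "u \<in> compl_component n E a" using ab by (auto simp: comp_iff)
  next
    fix u assume "u \<in> compl_component n E a"
    then show "u \<in> compl_component n E b" using ba by (auto simp: comp_iff)
  qed
qed

lemma comp_E: "a \<in> V \<Longrightarrow> b \<in> V \<Longrightarrow> b \<notin> compl_component n E a \<Longrightarrow> E a b"
proof (rule ccontr)
  assume a: "a \<in> V" and b: "b \<in> V" and nb: "b \<notin> compl_component n E a" and ne: "\<not> E a b"
  have "a \<noteq> b" using nb comp_self[OF a] by auto
  then have "Rc a b" using a b ne by (simp add: Rc_def)
  then have "b \<in> compl_component n E a" using b by (simp add: comp_iff)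
  then show False using nb by simp
qed

definition cmin :: "nat \<Rightarrow> nat" where "cmin a = Min (compl_component n E a)"

lemma comp_fin: "finite (compl_component n E a)"
  using comp_sub finite_subset by blast

lemma cmin_in: "a \<in> V \<Longrightarrow> cmin a \<in> compl_component n E a"
  unfolding cmin_def using comp_fin comp_self by (intro Min_in) auto

lemma cmin_le: "a \<in> V \<Longrightarrow> cmin a \<le> a"
  unfolding cmin_def using comp_fin comp_self by (intro Min_le) auto

lemma cmin_V: "a \<in> V \<Longrightarrow> cmin a \<in> V"
  using cmin_in comp_sub by blast

lemma cmin_eq: "a \<in> V \<Longrightarrow> b \<in> compl_component n E a \<Longrightarrow> cmin b = cmin a"
  unfolding cmin_def using comp_eq by simp

lemma cmin_same: "a \<in> V \<Longrightarrow> b \<in> V \<Longrightarrow> cmin a = cmin b \<Longrightarrow> b \<in> compl_component n E a"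
proof -
  assume a: "a \<in> V" and b: "b \<in> V" and e: "cmin a = cmin b"
  have "compl_component n E (cmin a) = compl_component n E a" using comp_eq[OF a cmin_in[OF a]] .
  moreover have "compl_component n E (cmin b) = compl_component n E b" using comp_eq[OF b cmin_in[OF b]] .
  ultimately have "compl_component n E a = compl_component n E b" using e by simp
  then show ?thesis using comp_self[OF b] by simp
qed

definition rk :: "nat \<Rightarrow> nat" where "rk a = cmin a * (n + 1) + a"

lemma rk_less_aux: "a \<le> n \<Longrightarrow> b \<le> n \<Longrightarrow> (x::nat) < y \<Longrightarrow> x * (n + 1) + a < y * (n + 1) + b"
proof -
  assume a: "a \<le> n" and b: "b \<le> n" and xy: "x < y"
  have "(x + 1) * (n + 1) \<le> y * (n + 1)" using xy by (intro mult_le_mono1) simp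
  then show ?thesis using a by (simp add: algebra_simps)
qed

lemma rk_less: "a \<in> V \<Longrightarrow> b \<in> V \<Longrightarrow> rk b < rk a \<longleftrightarrow> cmin b < cmin a \<or> (cmin b = cmin a \<and> b < a)"
proof -
  assume a: "a \<in> V" and b: "b \<in> V"
  have an: "a \<le> n" "b \<le> n" using a b by auto
  consider "cmin b < cmin a" | "cmin b = cmin a" | "cmin a < cmin b" by linarith
  then show ?thesis
  proof cases
    case 1 then show ?thesis using rk_less_aux[OF an(2) an(1) 1] by (simp add: rk_def)
  next
    case 2 then show ?thesis by (simp add: rk_def)
  next
    case 3 then show ?thesis using rk_less_aux[OF an(1) an(2) 3] by (simp add: rk_def)
  qed
qed

lemma rk_inj: "inj_on rk V"
proof (rule inj_onI)
  fix a b assume a: "a \<in> V" and b: "b \<in> V" and e: "rk a = rk b"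
  have "\<not> rk b < rk a" "\<not> rk a < rk b" using e by auto
  then show "a = b" using rk_less[OF a b] rk_less[OF b a] by linarith
qed

definition om :: "nat set \<Rightarrow> nat" where "om S = Max {card K | K. K \<subseteq> S \<and> is_clique E K}"

lemma om_set_fin: "finite S \<Longrightarrow> finite {card K | K. K \<subseteq> S \<and> is_clique E K}"
proof -
  assume "finite S"
  then have "finite (card ` Pow S)" by simp
  moreover have "{card K | K. K \<subseteq> S \<and> is_clique E K} \<subseteq> card ` Pow S" by auto
  ultimately show ?thesis by (rule finite_subset[rotated])
qed

lemma om_ge: "finite S \<Longrightarrow> K \<subseteq> S \<Longrightarrow> is_clique E K \<Longrightarrow> card K \<le> om S"
  unfolding om_def by (rule Max_ge[OF om_set_fin]) auto

lemma om_att: "finite S \<Longrightarrow> \<exists>K. K \<subseteq> S \<and> is_clique E K \<and> card K = om S"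
proof -
  assume fS: "finite S"
  have "{} \<subseteq> S \<and> is_clique E {}" by (simp add: is_clique_def)
  then have ne: "{card K | K. K \<subseteq> S \<and> is_clique E K} \<noteq> {}" by blast
  have "om S \<in> {card K | K. K \<subseteq> S \<and> is_clique E K}"
    unfolding om_def by (rule Max_in[OF om_set_fin[OF fS] ne])
  then show ?thesis by auto
qed

definition Bef :: "nat \<Rightarrow> nat set" where "Bef c = {b \<in> V. cmin b < c}"
definition Aft :: "nat \<Rightarrow> nat set" where "Aft c = {b \<in> V. c \<le> cmin b}"

lemma om_split:
  assumes c: "c \<in> V" and cc: "cmin c = c"
  shows "om (compl_component n E c) + om (Aft (Suc c)) \<le> om (Aft c)"
proof -
  define C where "C = compl_component n E c"
  have finC: "finite C" using comp_fin by (simp add: C_def)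
  have finA: "finite (Aft (Suc c))" by (simp add: Aft_def)
  have finA0: "finite (Aft c)" by (simp add: Aft_def)
  obtain K1 where K1: "K1 \<subseteq> C" "is_clique E K1" "card K1 = om C" using om_att[OF finC] by blast
  obtain K2 where K2: "K2 \<subseteq> Aft (Suc c)" "is_clique E K2" "card K2 = om (Aft (Suc c))"
    using om_att[OF finA] by blast
  have CV: "C \<subseteq> V" unfolding C_def by (rule comp_sub)
  have cminC: "cmin b = c" if "b \<in> C" for b using cmin_eq[OF c, of b] that cc by (simp add: C_def)
  have disj: "K1 \<inter> K2 = {}"
  proof (rule ccontr)
    assume "K1 \<inter> K2 \<noteq> {}"
    then obtain x where x: "x \<in> K1" "x \<in> K2" by blast
    then have "cmin x = c" using cminC K1(1) by blast
    moreover have "Suc c \<le> cmin x" using x(2) K2(1) by (auto simp: Aft_def)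
    ultimately show False by simp
  qed
  have cross: "E i j" if "i \<in> K1" "j \<in> K2" for i j
  proof -
    have iV: "i \<in> V" using that K1(1) CV by blast
    have jV: "j \<in> V" using that K2(1) by (auto simp: Aft_def)
    have "cmin i = c" using cminC that K1(1) by blast
    moreover have "cmin j > c" using that K2(1) by (auto simp: Aft_def)
    ultimately have "j \<notin> compl_component n E i" using cmin_eq[OF iV] by fastforce
    then show ?thesis using comp_E[OF iV jV] by simp
  qed
  have cl: "is_clique E (K1 \<union> K2)"
    unfolding is_clique_def
  proof (intro ballI impI)
    fix i j assume i: "i \<in> K1 \<union> K2" and j: "j \<in> K1 \<union> K2" and ij: "i \<noteq> j"
    show "E i j"
    proof (cases "i \<in> K1")
      case True
      show ?thesis
      proof (cases "j \<in> K1")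
        case True then show ?thesis using \<open>i \<in> K1\<close> ij K1(2) unfolding is_clique_def by blast
      next
        case False then show ?thesis using cross[OF \<open>i \<in> K1\<close>] j by blast
      qed
    next
      case False then have iK2: "i \<in> K2" using i by blast
      show ?thesis
      proof (cases "j \<in> K1")
        case True then show ?thesis using cross[OF True iK2] sym by blast
      next
        case False then show ?thesis using iK2 j ij K2(2) unfolding is_clique_def by blast
      qed
    qed
  qed
  have sub: "K1 \<union> K2 \<subseteq> Aft c" using K1(1) K2(1) CV cminC by (auto simp: Aft_def)
  have "card (K1 \<union> K2) = card K1 + card K2"
    using disj K1(1) K2(1) finC finA by (intro card_Un_disjoint) (auto intro: finite_subset)
  moreover have "card (K1 \<union> K2) \<le> om (Aft c)" using om_ge[OF finA0 sub cl] .
  ultimately show ?thesis using K1(3) K2(3) by (simp add: C_def)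
qed

end

context ctx begin

lemma Ref:
  assumes wb: "weak_brehmer n E T" and c: "c \<in> V" and cc: "cmin c = c"
    and QS: "\<forall>m g. R m g (Bef (Suc c)) \<le> real (MC (om (Aft (Suc c))) m) * (norm g)\<^sup>2"
  shows "\<forall>g BC. BC \<subseteq> compl_component n E c \<longrightarrow> R m g (Bef c \<union> BC) \<le>
    (\<Sum>K\<in>Cl (compl_component n E c). zz (compl_component n E c) g K *
        real (MC (om (compl_component n E c) - card (BC \<inter> K) + om (Aft (Suc c))) m))"
proof -
  define C where "C = compl_component n E c"
  define A' where "A' = om (Aft (Suc c))"
  have CV: "C \<subseteq> V" unfolding C_def by (rule comp_sub)
  have finC: "finite C" using comp_fin by (simp add: C_def)
  have cminC: "cmin b = c" if "b \<in> C" for b using cmin_eq[OF c, of b] that cc by (simp add: C_def)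
  have inC: "b \<in> C" if "b \<in> V" "cmin b = c" for b using cmin_same[OF c that(1)] that(2) cc by (simp add: C_def)
  have zz0: "zz C g K \<ge> 0" if "K \<in> Cl C" for g K using zz_nonneg[OF wb c] that by (simp add: C_def)
  have finCl: "finite (Cl C)" by (rule Cl_finite[OF finC])
  have main: "\<forall>g BC. BC \<subseteq> C \<longrightarrow> R m g (Bef c \<union> BC) \<le>
      (\<Sum>K\<in>Cl C. zz C g K * real (MC (om C - card (BC \<inter> K) + A') m))" for m
  proof (induction m)
    case 0
    show ?case using zz_sum[OF finC] by (simp add: R_0)
  next
    case (Suc k)
    show ?case
    proof (intro allI impI)
      fix g BC assume BC: "BC \<subseteq> C"
      define B where "B = Bef c \<union> BC"
      define ga where "ga = (\<lambda>a. adjoint (T a) g)"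
      have split: "V - B = (C - BC) \<union> Aft (Suc c)"
      proof (intro set_eqI iffI)
        fix b assume b: "b \<in> V - B"
        then have bV: "b \<in> V" and nb: "\<not> cmin b < c" "b \<notin> BC" by (auto simp: B_def Bef_def)
        show "b \<in> (C - BC) \<union> Aft (Suc c)"
        proof (cases "cmin b = c")
          case True then show ?thesis using inC[OF bV] nb by blast
        next
          case False then show ?thesis using nb bV by (auto simp: Aft_def)
        qed
      next
        fix b assume b: "b \<in> (C - BC) \<union> Aft (Suc c)"
        then show "b \<in> V - B"
        proof
          assume "b \<in> C - BC"
          then show ?thesis using cminC CV by (auto simp: B_def Bef_def)
        next
          assume "b \<in> Aft (Suc c)"
          then show ?thesis using BC cminC by (force simp: B_def Bef_def Aft_def)
        qed
      qed
      have disj: "(C - BC) \<inter> Aft (Suc c) = {}" using cminC by (force simp: Aft_def)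
      have finA: "finite (Aft (Suc c))" by (simp add: Aft_def)
      have R1: "R (Suc k) g B = (\<Sum>a\<in>C - BC. R k (ga a) (Ba rk B a)) + (\<Sum>a\<in>Aft (Suc c). R k (ga a) (Ba rk B a))"
        unfolding R_Suc[OF rk_inj] split ga_def
        by (rule sum.union_disjoint) (use finC finA disj in auto)
      have P2: "(\<Sum>a\<in>Aft (Suc c). R k (ga a) (Ba rk B a)) \<le> real (MC A' (Suc k)) * (norm g)\<^sup>2"
      proof -
        have BaEq: "Ba rk B a = Ba rk (Bef (Suc c)) a" if a: "a \<in> Aft (Suc c)" for a
        proof -
          have aV: "a \<in> V" and ca: "Suc c \<le> cmin a" using a by (auto simp: Aft_def)
          have lt: "rk b < rk a" if "b \<in> Bef (Suc c)" for b
            using that rk_less[OF aV, of b] ca by (auto simp: Bef_def)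
          have "B \<subseteq> Bef (Suc c)" using BC cminC CV by (auto simp: B_def Bef_def)
          then show ?thesis using lt unfolding Ba_def by blast
        qed
        have VB: "V - Bef (Suc c) = Aft (Suc c)" by (auto simp: Bef_def Aft_def)
        have "(\<Sum>a\<in>Aft (Suc c). R k (ga a) (Ba rk B a)) = R (Suc k) g (Bef (Suc c))"
          unfolding R_Suc[OF rk_inj] VB ga_def using BaEq by (intro sum.cong refl) simp
        also have "\<dots> \<le> real (MC A' (Suc k)) * (norm g)\<^sup>2" using QS by (simp add: A'_def)
        finally show ?thesis .
      qed
      define Bp where "Bp = (\<lambda>a. NC C {a} \<inter> (BC \<union> {b. b < a}))"
      define \<phi> where "\<phi> = (\<lambda>a J. real (MC (om C - card (Bp a \<inter> J) + A') k))"
      have BaC: "Ba rk B a = Bef c \<union> Bp a" if a: "a \<in> C - BC" for a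
      proof (intro set_eqI iffI)
        have aV: "a \<in> V" and ca: "cmin a = c" using a CV cminC by auto
        fix b
        {
          assume b: "b \<in> Ba rk B a"
          then have e: "E a b" and bB: "b \<in> B \<or> rk b < rk a" by (auto simp: Ba_def)
          have bV: "b \<in> V" using onV[OF e] by simp
          show "b \<in> Bef c \<union> Bp a"
          proof (cases "cmin b < c")
            case True then show ?thesis using bV by (simp add: Bef_def)
          next
            case False
            have "\<not> cmin a < cmin b"
            proof
              assume lt: "cmin a < cmin b"
              have "b \<notin> BC" using BC cminC lt ca by auto
              moreover have "\<not> rk b < rk a" using rk_less[OF aV bV] lt by simp
              ultimately show False using bB False by (auto simp: B_def Bef_def)
            qed
            then have cb: "cmin b = c" using False ca by simp
            then have bC: "b \<in> C" using inC[OF bV] by simp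
            have "b \<in> BC \<or> b < a" using bB rk_less[OF aV bV] cb ca False by (auto simp: B_def Bef_def)
            moreover have "b \<in> NC C {a}" using bC e sym by (auto simp: NC_def)
            ultimately show ?thesis by (auto simp: Bp_def)
          qed
        }
        {
          assume b: "b \<in> Bef c \<union> Bp a"
          then show "b \<in> Ba rk B a"
          proof
            assume bb: "b \<in> Bef c"
            then have bV: "b \<in> V" and lt: "cmin b < c" by (auto simp: Bef_def)
            have "b \<notin> compl_component n E a" using cmin_eq[OF aV, of b] lt ca by auto
            then have "E a b" using comp_E[OF aV bV] by simp
            then show ?thesis using bb by (simp add: Ba_def B_def)
          next
            assume bb: "b \<in> Bp a"
            then have bC: "b \<in> C" and e: "E b a" and o: "b \<in> BC \<or> b < a" by (auto simp: Bp_def NC_def)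
            have bV: "b \<in> V" using bC CV by blast
            have "b \<in> B \<or> rk b < rk a" using o rk_less[OF aV bV] cminC[OF bC] ca by (auto simp: B_def)
            then show ?thesis using e sym by (auto simp: Ba_def)
          qed
        }
      qed
      have P1a: "R k (ga a) (Ba rk B a) \<le> (\<Sum>K\<in>{K\<in>Cl C. a \<in> K}. zz C g K * \<phi> a (K - {a}))"
        if a: "a \<in> C - BC" for a
      proof -
        have BpC: "Bp a \<subseteq> C" by (auto simp: Bp_def NC_def)
        have aC: "a \<in> C" using a by simp
        have "R k (ga a) (Ba rk B a) = R k (ga a) (Bef c \<union> Bp a)" using BaC[OF a] by simp
        also have "\<dots> \<le> (\<Sum>K'\<in>Cl C. zz C (ga a) K' * real (MC (om C - card (Bp a \<inter> K') + A') k))"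
          using Suc.IH BpC by blast
        also have "\<dots> = (\<Sum>K'\<in>Cl C. zz C (ga a) K' * \<phi> a (K' \<inter> NC C {a}))"
        proof (rule sum.cong[OF refl])
          fix K' assume "K' \<in> Cl C"
          have "Bp a \<inter> K' = Bp a \<inter> (K' \<inter> NC C {a})" by (auto simp: Bp_def)
          then show "zz C (ga a) K' * real (MC (om C - card (Bp a \<inter> K') + A') k) = zz C (ga a) K' * \<phi> a (K' \<inter> NC C {a})"
            by (simp add: \<phi>_def)
        qed
        also have "\<dots> = (\<Sum>K\<in>{K\<in>Cl C. a \<in> K}. zz C g K * \<phi> a (K - {a}))"
          unfolding ga_def by (rule zz_shift[OF finC CV aC])
        finally show ?thesis .
      qed
      have P1: "(\<Sum>a\<in>C - BC. R k (ga a) (Ba rk B a)) \<le> (\<Sum>K\<in>Cl C. zz C g K * (\<Sum>a\<in>K - BC. \<phi> a (K - {a})))"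
      proof -
        have "(\<Sum>a\<in>C - BC. R k (ga a) (Ba rk B a)) \<le> (\<Sum>a\<in>C - BC. \<Sum>K\<in>{K\<in>Cl C. a \<in> K}. zz C g K * \<phi> a (K - {a}))"
          using P1a by (rule sum_mono)
        also have "\<dots> = (\<Sum>K\<in>Cl C. \<Sum>a\<in>{a\<in>C - BC. a \<in> K}. zz C g K * \<phi> a (K - {a}))"
          using sum.swap_restrict[of "C - BC" "Cl C" "\<lambda>a K. zz C g K * \<phi> a (K - {a})" "\<lambda>a K. a \<in> K"] finC finCl
          by simp
        also have "\<dots> = (\<Sum>K\<in>Cl C. zz C g K * (\<Sum>a\<in>K - BC. \<phi> a (K - {a})))"
        proof (rule sum.cong[OF refl])
          fix K assume "K \<in> Cl C"
          then have "{a\<in>C - BC. a \<in> K} = K - BC" by (auto simp: Cl_def)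
          then show "(\<Sum>a\<in>{a\<in>C - BC. a \<in> K}. zz C g K * \<phi> a (K - {a})) = zz C g K * (\<Sum>a\<in>K - BC. \<phi> a (K - {a}))"
            by (simp add: sum_distrib_left)
        qed
        finally show ?thesis .
      qed
      have perK: "(\<Sum>a\<in>K - BC. \<phi> a (K - {a})) + real (MC A' (Suc k)) \<le> real (MC (om C - card (BC \<inter> K) + A') (Suc k))"
        if K: "K \<in> Cl C" for K
      proof -
        have KC: "K \<subseteq> C" "is_clique E K" using K by (auto simp: Cl_def)
        have finK: "finite K" using KC finC finite_subset by blast
        define s where "s = card (BC \<inter> K)"
        define D where "D = om C - s"
        have cardK: "card K = s + card (K - BC)"
        proof -
          have "K = (BC \<inter> K) \<union> (K - BC)" by blast
          moreover have "(BC \<inter> K) \<inter> (K - BC) = {}" by blast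
          ultimately show ?thesis unfolding s_def using finK
            by (metis card_Un_disjoint finite_Diff finite_Int)
        qed
        have "card K \<le> om C" using om_ge[OF finC KC] .
        then have tD: "card (K - BC) \<le> D" using cardK by (simp add: D_def)
        have eqa: "\<phi> a (K - {a}) = real (MC (A' + (D - card {b\<in>K - BC. b < a})) k)" if a: "a \<in> K - BC" for a
        proof -
          have "Bp a \<inter> (K - {a}) = (BC \<inter> K) \<union> {b\<in>K - BC. b < a}"
          proof (intro set_eqI iffI)
            fix b assume "b \<in> Bp a \<inter> (K - {a})"
            then show "b \<in> (BC \<inter> K) \<union> {b\<in>K - BC. b < a}" by (auto simp: Bp_def)
          next
            fix b assume b: "b \<in> (BC \<inter> K) \<union> {b\<in>K - BC. b < a}"
            then have bK: "b \<in> K" and ba: "b \<noteq> a" using a by auto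
            have "E b a" using KC(2) bK a ba unfolding is_clique_def by blast
            then have "b \<in> NC C {a}" using bK KC(1) by (auto simp: NC_def)
            then show "b \<in> Bp a \<inter> (K - {a})" using b ba by (auto simp: Bp_def)
          qed
          moreover have "card ((BC \<inter> K) \<union> {b\<in>K - BC. b < a}) = s + card {b\<in>K - BC. b < a}"
            unfolding s_def using finK by (intro card_Un_disjoint) auto
          moreover have "card {b\<in>K - BC. b < a} < card (K - BC)" using rank_less[of "K - BC" a] finK a by simp
          ultimately show ?thesis unfolding \<phi>_def D_def using tD
            by (simp add: algebra_simps)
        qed
        have "(\<Sum>a\<in>K - BC. \<phi> a (K - {a})) = (\<Sum>a\<in>K - BC. real (MC (A' + (D - card {b\<in>K - BC. b < a})) k))"
          using eqa by (rule sum.cong[OF refl])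
        moreover have "(\<Sum>a\<in>K - BC. real (MC (A' + (D - card {b\<in>K - BC. b < a})) k)) + real (MC A' (Suc k))
            \<le> real (MC (A' + D) (Suc k))"
          using count_bound[of "K - BC" D A' k] finK tD by simp
        moreover have "A' + D = om C - card (BC \<inter> K) + A'" by (simp add: D_def s_def)
        ultimately show ?thesis by simp
      qed
      have "R (Suc k) g (Bef c \<union> BC) = R (Suc k) g B" by (simp add: B_def)
      also have "\<dots> \<le> (\<Sum>K\<in>Cl C. zz C g K * (\<Sum>a\<in>K - BC. \<phi> a (K - {a}))) + real (MC A' (Suc k)) * (norm g)\<^sup>2"
        using R1 P1 P2 by linarith
      also have "real (MC A' (Suc k)) * (norm g)\<^sup>2 = (\<Sum>K\<in>Cl C. zz C g K * real (MC A' (Suc k)))"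
      proof -
        have "(\<Sum>K\<in>Cl C. zz C g K * real (MC A' (Suc k))) = (\<Sum>K\<in>Cl C. zz C g K) * real (MC A' (Suc k))"
          by (rule sum_distrib_right[symmetric])
        then show ?thesis using zz_sum[OF finC, of g] by simp
      qed
      also have "(\<Sum>K\<in>Cl C. zz C g K * (\<Sum>a\<in>K - BC. \<phi> a (K - {a}))) + (\<Sum>K\<in>Cl C. zz C g K * real (MC A' (Suc k)))
          = (\<Sum>K\<in>Cl C. zz C g K * ((\<Sum>a\<in>K - BC. \<phi> a (K - {a})) + real (MC A' (Suc k))))"
        by (simp add: sum.distrib distrib_left)
      also have "\<dots> \<le> (\<Sum>K\<in>Cl C. zz C g K * real (MC (om C - card (BC \<inter> K) + A') (Suc k)))"
        using perK zz0 by (intro sum_mono mult_left_mono) auto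
      finally show "R (Suc k) g (Bef c \<union> BC) \<le> (\<Sum>K\<in>Cl C. zz C g K * real (MC (om C - card (BC \<inter> K) + A') (Suc k)))" .
    qed
  qed
  show ?thesis using main unfolding C_def A'_def by blast
qed

end

context ctx begin

lemma Q_all:
  assumes wb: "weak_brehmer n E T" and c: "c \<le> n + 1"
  shows "\<forall>m g. R m g (Bef c) \<le> real (MC (om (Aft c)) m) * (norm g)\<^sup>2"
  using c
proof (induction c rule: inc_induct)
  case base
  have BV: "Bef (n + 1) = V" using cmin_le by (fastforce simp: Bef_def)
  show ?case
  proof (intro allI)
    fix m g
    show "R m g (Bef (n + 1)) \<le> real (MC (om (Aft (n + 1))) m) * (norm g)\<^sup>2"
    proof (cases m)
      case 0 then show ?thesis by (simp add: R_0)
    next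
      case (Suc k) then show ?thesis using R_Suc[OF rk_inj, of k g V] BV by simp
    qed
  qed
next
  case (step c')
  show ?case
  proof (cases "c' \<in> V \<and> cmin c' = c'")
    case True
    then have c'V: "c' \<in> V" and cc: "cmin c' = c'" by auto
    define C where "C = compl_component n E c'"
    have finC: "finite C" using comp_fin by (simp add: C_def)
    have ref: "\<forall>g BC. BC \<subseteq> C \<longrightarrow> R m g (Bef c' \<union> BC) \<le>
      (\<Sum>K\<in>Cl C. zz C g K * real (MC (om C - card (BC \<inter> K) + om (Aft (Suc c'))) m))" for m
      using Ref[OF wb c'V cc step.IH] by (simp add: C_def)
    show ?thesis
    proof (intro allI)
      fix m g
      have "R m g (Bef c') \<le> (\<Sum>K\<in>Cl C. zz C g K * real (MC (om C + om (Aft (Suc c'))) m))"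
        using ref[of m, THEN spec[of _ g], THEN spec[of _ "{}"]] by simp
      also have "\<dots> = (\<Sum>K\<in>Cl C. zz C g K) * real (MC (om C + om (Aft (Suc c'))) m)"
        by (rule sum_distrib_right[symmetric])
      also have "\<dots> = (norm g)\<^sup>2 * real (MC (om C + om (Aft (Suc c'))) m)"
        using zz_sum[OF finC] by simp
      also have "\<dots> \<le> (norm g)\<^sup>2 * real (MC (om (Aft c')) m)"
        using om_split[OF c'V cc] MC_mono by (intro mult_left_mono) (auto simp: C_def)
      finally show "R m g (Bef c') \<le> real (MC (om (Aft c')) m) * (norm g)\<^sup>2" by (simp add: mult.commute)
    qed
  next
    case False
    have nb: "cmin b \<noteq> c'" if b: "b \<in> V" for b
    proof
      assume e: "cmin b = c'"
      have "cmin b \<in> V" using cmin_V[OF b] .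
      moreover have "cmin (cmin b) = cmin b" using cmin_eq[OF b cmin_in[OF b]] .
      ultimately show False using False e by simp
    qed
    have "Bef c' = Bef (Suc c')" unfolding Bef_def
    proof (intro Collect_cong conj_cong refl)
      fix b assume "b \<in> V" then show "cmin b < c' \<longleftrightarrow> cmin b < Suc c'" using nb[of b] by linarith
    qed
    moreover have "Aft c' = Aft (Suc c')" unfolding Aft_def
    proof (intro Collect_cong conj_cong refl)
      fix b assume "b \<in> V" then show "c' \<le> cmin b \<longleftrightarrow> Suc c' \<le> cmin b" using nb[of b] by linarith
    qed
    ultimately show ?thesis using step.IH by simp
  qed
qed

end

theorem lemma4p3:
  fixes n :: nat and E :: "nat \<Rightarrow> nat \<Rightarrow> bool"
    and T :: "nat \<Rightarrow> 'h::{real_inner, complete_space} \<Rightarrow> 'h"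
    and m :: nat and h :: 'h
  assumes sym: "\<And>i j. E i j \<Longrightarrow> E j i"
    and irrefl: "\<And>i. \<not> E i i"
    and onV: "\<And>i j. E i j \<Longrightarrow> i \<in> {1..n} \<and> j \<in> {1..n}"
    and fam: "gamma_family n E T"
    and wb: "weak_brehmer n E T"
    and m: "m \<ge> 1"
  shows "(\<Sum>X \<in> monoid_elems_len n E m. (norm (adjoint (T_word T (SOME w. w \<in> X)) h))\<^sup>2)
           \<le> real ((clique_number n E + m - 1) choose m) * (norm h)\<^sup>2"
proof -
  interpret ctx n E T
    by (unfold_locales) (use sym irrefl onV fam in auto)
  have lhs: "(\<Sum>X \<in> monoid_elems_len n E m. (norm (adjoint (T_word T (SOME w. w \<in> X)) h))\<^sup>2) = R m h (Bef 1)"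
  proof -
    have "Bef 1 = {}" using cmin_V by (force simp: Bef_def)
    then show ?thesis by (simp add: R_def rep_def xg_def)
  qed
  have "Aft 1 = {1..n}" using cmin_V by (force simp: Aft_def)
  then have om: "om (Aft 1) = clique_number n E" by (simp add: om_def clique_number_def)
  have "R m h (Bef 1) \<le> real (MC (om (Aft 1)) m) * (norm h)\<^sup>2"
    using Q_all[OF wb, of 1] by simp
  then show ?thesis using lhs om by (simp add: MC_def)
qed


end
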